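(* Let the data $\eta,Q_g,Q_p,\Psi,c_{max},\theta_s,S$ be as in the context. Then there exists at least one $c\in[c_{max},0]$ for which the interface problem (P$_c$) described in the context admits a solution $\theta$, and every such $c$ lies in the open interval $(c_{max},0)$.
   Context: Dimensionless travelling-wave formulation of a solid-propellant combustion model ($x<0$ inert solid, $x>0$ gas, interface at $x=0$; $\theta$ dimensionless temperature; $c<0$ dimensionless regression velocity). Data: $\eta>0$; the gas reaction heat $Q_g>0$ and the pyrolysis heat $Q_p\in\mathbb R$ with $Q_p>-Q_g$; $\Psi:[0,1]\to[0,\infty)$ of class $C^\infty$ with $\Psi(\theta)>0$ for $\theta\in[0,1)$ and $\Psi(1)=0$; a number $c_{max}<0$ and a surface-temperature map $\theta_s:[c_{max},0]\to[0,1]$ (inverse of a pyrolysis law with cut-off at the initial temperature) that is continuous and strictly decreasing with $\theta_s(0)=0$, $\theta_s(c_{max})=1$, and $C^\infty$ on $[c_{max},0)$ with $\theta_s'(c)<0$ there. Define $S(c):=\eta\,\frac{Q_p}{Q_p+Q_g}\,c$. For $c\in[c_{max},0]$, problem (P$_c$) asks for $\theta:\mathbb R\to[0,1]$, continuous, of class $C^2$ on $(-\infty,0]$ and on $[0,\infty)$ (one-sided derivatives at $0$), such that $\theta''+c\theta'=0$ for $x<0$; $\theta''+\eta c\theta'=-\Psi(\theta)$ for $x>0$; $\theta(x)\to0$ as $x\to-\infty$, $\theta(0)=\theta_s(c)$, $\theta(x)\to1$ as $x\to+\infty$, $\theta'(x)\to0$ as $x\to\pm\infty$; and the interface heat balance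 $\theta'(0^+)-\eta\,\theta'(0^-)=S(c)$. *)

theory Defs
  imports "HOL-Analysis.Analysis"
begin

text \<open>C-infinity on a set S (derivatives taken within S, so one-sided at endpoints):
  there is a sequence of functions D n with D 0 = f on S and D n having derivative
  D (Suc n) at every point of S, within S.\<close>
definition smooth_within :: "(real \<Rightarrow> real) \<Rightarrow> real set \<Rightarrow> bool" where
  "smooth_within f S \<longleftrightarrow>
     (\<exists>D :: nat \<Rightarrow> real \<Rightarrow> real.
        (\<forall>x\<in>S. D 0 x = f x) \<and>
        (\<forall>n. \<forall>x\<in>S. (D n has_real_derivative D (Suc n) x) (at x within S)))"

definition Sfun :: "real \<Rightarrow> real \<Rightarrow> real \<Rightarrow> real \<Rightarrow> real" where
  "Sfun eta Qg Qp c = eta * (Qp / (Qp + Qg)) * c"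

text \<open>theta solves problem (P_c).  The functions d1, dd1 are the first and second
  derivatives of theta on (-infinity,0] (one-sided at 0), d2, dd2 those on [0,infinity).\<close>
definition solves_Pc ::
  "real \<Rightarrow> real \<Rightarrow> real \<Rightarrow> (real \<Rightarrow> real) \<Rightarrow> (real \<Rightarrow> real) \<Rightarrow> real \<Rightarrow> (real \<Rightarrow> real) \<Rightarrow> bool"
where
  "solves_Pc eta Qg Qp Psi theta_s c theta \<longleftrightarrow>
     (\<forall>x. 0 \<le> theta x \<and> theta x \<le> 1) \<and>
     continuous_on UNIV theta \<and>
     (\<exists>d1 dd1 d2 dd2 :: real \<Rightarrow> real.
        (\<forall>x\<le>0. (theta has_real_derivative d1 x) (at x within {..0})) \<and>
        (\<forall>x\<le>0. (d1 has_real_derivative dd1 x) (at x within {..0})) \<and>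
        continuous_on {..0} dd1 \<and>
        (\<forall>x\<ge>0. (theta has_real_derivative d2 x) (at x within {0..})) \<and>
        (\<forall>x\<ge>0. (d2 has_real_derivative dd2 x) (at x within {0..})) \<and>
        continuous_on {0..} dd2 \<and>
        (\<forall>x<0. dd1 x + c * d1 x = 0) \<and>
        (\<forall>x>0. dd2 x + eta * c * d2 x = - Psi (theta x)) \<and>
        (theta \<longlongrightarrow> 0) at_bot \<and>
        theta 0 = theta_s c \<and>
        (theta \<longlongrightarrow> 1) at_top \<and>
        (d1 \<longlongrightarrow> 0) at_bot \<and>
        (d2 \<longlongrightarrow> 0) at_top \<and>
        d2 0 - eta * d1 0 = Sfun eta Qg Qp c)"

end

theory Submission
  imports Defs
begin


lemma deriv_within_to_at:
  fixes f :: "real \<Rightarrow> real"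
  assumes "(f has_real_derivative D) (at z within S)" "z \<in> T" "open T" "T \<subseteq> S"
  shows "(f has_real_derivative D) (at z)"
proof -
  have "at z within S = at z" using at_within_open_subset[OF assms(2-4)] .
  then show ?thesis using assms(1) by simp
qed

lemma mono_on_interval:
  fixes f f' :: "real \<Rightarrow> real"
  assumes der: "\<And>z. z \<in> S \<Longrightarrow> (f has_real_derivative f' z) (at z within S)"
    and iv: "{x..y} \<subseteq> S" and xy: "x \<le> y"
    and nn: "\<And>z. x < z \<Longrightarrow> z < y \<Longrightarrow> f' z \<ge> 0"
  shows "f x \<le> f y"
proof (rule DERIV_nonneg_imp_increasing_open[OF xy])
  show "continuous_on {x..y} f"
    using DERIV_continuous_on[OF der] continuous_on_subset iv by blast
  fix z assume z: "x < z" "z < y"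
  have "(f has_real_derivative f' z) (at z)"
    by (rule deriv_within_to_at[OF der[of z], of "{x<..<y}"]) (use z iv in auto)
  then show "\<exists>y. (f has_real_derivative y) (at z) \<and> 0 \<le> y" using nn z by blast
qed

lemma antimono_on_interval:
  fixes f f' :: "real \<Rightarrow> real"
  assumes der: "\<And>z. z \<in> S \<Longrightarrow> (f has_real_derivative f' z) (at z within S)"
    and iv: "{x..y} \<subseteq> S" and xy: "x \<le> y"
    and nn: "\<And>z. x < z \<Longrightarrow> z < y \<Longrightarrow> f' z \<le> 0"
  shows "f y \<le> f x"
proof -
  have "(\<lambda>z. - f z) x \<le> (\<lambda>z. - f z) y"
    by (rule mono_on_interval[where f'="\<lambda>z. - f' z" and S=S])
       (use der iv xy nn in \<open>auto intro: DERIV_minus\<close>)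
  then show ?thesis by simp
qed

lemma barrier:
  fixes f f' :: "real \<Rightarrow> real"
  assumes der: "\<And>z. z \<ge> x0 \<Longrightarrow> (f has_real_derivative f' z) (at z within {x0..})"
    and start: "f x0 \<ge> e"
    and pos: "\<And>z. z \<ge> x0 \<Longrightarrow> f z \<ge> e \<Longrightarrow> f' z \<ge> \<delta>"
    and dpos: "\<delta> > 0"
    and x: "x \<ge> x0"
  shows "f x \<ge> e + \<delta> * (x - x0)"
proof -
  have ge: "f x1 \<ge> e" if x1: "x1 \<ge> x0" for x1
  proof (rule ccontr)
    assume nf: "\<not> e \<le> f x1"
    define T where "T = {x0..x1} \<inter> f -` {e..}"
    have "continuous_on {x0..} f"
      by (rule DERIV_continuous_on[of "{x0..}" f f']) (use der in auto)
    then have cont: "continuous_on {x0..x1} f"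
      by (rule continuous_on_subset) auto
    have clT: "closed T" unfolding T_def
      by (rule continuous_closed_preimage[OF cont]) auto
    have ne: "T \<noteq> {}" using start x1 unfolding T_def by auto
    have bdd: "bdd_above T" unfolding T_def by (auto intro: bdd_aboveI[of _ x1])
    define s where "s = Sup T"
    have sT: "s \<in> T" using closed_contains_Sup[OF ne bdd clT] s_def by simp
    then have s1: "s \<le> x1" "s \<ge> x0" "f s \<ge> e" unfolding T_def by auto
    then have "s < x1" using nf by (cases "s = x1") auto
    have "f' s \<ge> \<delta>" using pos s1 by auto
    then have fs: "0 < f' s" using dpos by simp
    from has_real_derivative_pos_inc_right[OF der[OF s1(2)] fs]
    obtain d where d: "d > 0" "\<And>h. h > 0 \<Longrightarrow> s + h \<in> {x0..} \<Longrightarrow> h < d \<Longrightarrow> f s < f (s + h)"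
      by blast
    define h where "h = min (d/2) ((x1 - s)/2)"
    have hh: "h \<le> (x1 - s)/2" "h \<le> d/2" "h > 0" unfolding h_def using d \<open>s < x1\<close>
      by (auto simp: min_def)
    have "2 * h \<le> x1 - s" using hh(1) by simp
    then have h1: "s + h \<le> x1" using hh(3) by linarith
    have h: "h > 0" "h < d" "s + h \<le> x1" using hh d h1 by linarith+
    have "f (s + h) > f s" using d(2)[of h] h s1 by auto
    then have "s + h \<in> T" using h s1 unfolding T_def by auto
    then have "s + h \<le> s" using cSup_upper[OF _ bdd, of "s + h"] unfolding s_def by blast
    then show False using h by auto
  qed
  have "(\<lambda>z. f z - \<delta> * z) x0 \<le> (\<lambda>z. f z - \<delta> * z) x"
    apply (rule mono_on_interval[where S="{x0..}" and f'="\<lambda>z. f' z - \<delta>" and f="\<lambda>z. f z - \<delta> * z" and x=x0 and y=x])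
    using der x pos ge by (auto intro!: derivative_eq_intros)
  then show ?thesis using start by (simp add: algebra_simps)
qed


lemma left_interface:
  fixes theta d1 dd1 :: "real \<Rightarrow> real"
  assumes t': "\<forall>x\<le>0. (theta has_real_derivative d1 x) (at x within {..0})"
   and d1': "\<forall>x\<le>0. (d1 has_real_derivative dd1 x) (at x within {..0})"
   and eq: "\<forall>x<0. dd1 x + c * d1 x = 0"
   and lt: "(theta \<longlongrightarrow> 0) at_bot" and ld: "(d1 \<longlongrightarrow> 0) at_bot"
  shows "d1 0 = - c * theta 0"
proof -
  define g where "g z = d1 z + c * theta z" for z
  have der: "(g has_real_derivative (dd1 z + c * d1 z)) (at z within {..0})" if "z \<in> {..0}" for z
    unfolding g_def using t' d1' that by (auto intro!: derivative_eq_intros)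
  have const: "g x = g 0" if "x \<le> 0" for x
  proof -
    have "g x \<le> g 0"
      by (rule mono_on_interval[OF der]) (use that eq in auto)
    moreover have "g 0 \<le> g x"
      by (rule antimono_on_interval[OF der]) (use that eq in auto)
    ultimately show ?thesis by simp
  qed
  have "(g \<longlongrightarrow> 0 + c * 0) at_bot" unfolding g_def
    by (intro tendsto_intros ld lt)
  then have lim: "(g \<longlongrightarrow> 0) at_bot" by simp
  have ev: "eventually (\<lambda>x. g x = g 0) at_bot"
    using const eventually_at_bot_linorder by blast
  have "((\<lambda>x::real. g 0) \<longlongrightarrow> 0) at_bot"
    using Lim_transform_eventually[OF lim ev] by simp
  then have "g 0 = 0" by (simp add: tendsto_const_iff)
  then show ?thesis unfolding g_def by simp
qed

lemma necessity:
  fixes eta Qg Qp cmax :: real and Psi theta_s :: "real \<Rightarrow> real"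
  assumes eta_pos: "eta > 0"
    and Qg_pos: "Qg > 0"
    and Qp_gt: "Qp > - Qg"
    and Psi_nonneg: "\<forall>t\<in>{0..1}. Psi t \<ge> 0"
    and cmax_neg: "cmax < 0"
    and ths_0: "theta_s 0 = 0"
    and ths_cmax: "theta_s cmax = 1"
    and c: "c \<in> {cmax..0}"
    and sol: "solves_Pc eta Qg Qp Psi theta_s c theta"
  shows "c \<in> {cmax<..<0}"
proof -
  from sol obtain d1 dd1 d2 dd2 where
    rng: "\<forall>x. 0 \<le> theta x \<and> theta x \<le> 1" and
    t1: "\<forall>x\<le>0. (theta has_real_derivative d1 x) (at x within {..0})" and
    t2: "\<forall>x\<le>0. (d1 has_real_derivative dd1 x) (at x within {..0})" and
    t3: "\<forall>x\<ge>0. (theta has_real_derivative d2 x) (at x within {0..})" and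
    t4: "\<forall>x\<ge>0. (d2 has_real_derivative dd2 x) (at x within {0..})" and
    e1: "\<forall>x<0. dd1 x + c * d1 x = 0" and
    e2: "\<forall>x>0. dd2 x + eta * c * d2 x = - Psi (theta x)" and
    lb: "(theta \<longlongrightarrow> 0) at_bot" and
    th0: "theta 0 = theta_s c" and
    lt: "(theta \<longlongrightarrow> 1) at_top" and
    ld1: "(d1 \<longlongrightarrow> 0) at_bot" and
    intf: "d2 0 - eta * d1 0 = Sfun eta Qg Qp c"
    unfolding solves_Pc_def by blast
  have d10: "d1 0 = - c * theta 0" by (rule left_interface[OF t1 t2 e1 lb ld1])
  have QQ: "Qp + Qg > 0" using Qp_gt by simp
  have "c \<noteq> cmax"
  proof
    assume cc: "c = cmax"
    have "d2 0 = eta * (Qp / (Qp + Qg)) * c - eta * c"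
      using intf d10 th0 ths_cmax cc unfolding Sfun_def by (simp add: algebra_simps)
    also have "\<dots> = eta * c * (Qp / (Qp + Qg) - 1)" by (simp add: algebra_simps)
    also have "\<dots> = - eta * c * (Qg / (Qp + Qg))" using QQ by (simp add: field_simps)
    finally have d2e: "d2 0 = eta * (-c) * (Qg / (Qp + Qg))" by simp
    have "eta * (-c) * (Qg / (Qp + Qg)) > 0" using eta_pos cc cmax_neg QQ Qg_pos
      by (intro mult_pos_pos divide_pos_pos) auto
    then have "d2 0 > 0" using d2e by simp
    then obtain d where d: "d > 0" "\<And>h. h > 0 \<Longrightarrow> 0 + h \<in> {0..} \<Longrightarrow> h < d \<Longrightarrow> theta 0 < theta (0 + h)"
      using has_real_derivative_pos_inc_right[of theta "d2 0" 0 "{0..}"] t3 by force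
    have "theta 0 < theta (d/2)" using d(2)[of "d/2"] d(1) by auto
    then show False using rng th0 ths_cmax cc by (metis not_le)
  qed
  moreover have "c \<noteq> 0"
  proof
    assume cc: "c = 0"
    have d20: "d2 0 = 0" using intf d10 cc unfolding Sfun_def by simp
    have d2le: "d2 x \<le> 0" if "x \<ge> 0" for x
    proof -
      have "d2 x \<le> d2 0"
        apply (rule antimono_on_interval[where S="{0..}" and f'=dd2 and f=d2 and x=0 and y=x])
        using t4 e2 cc that rng Psi_nonneg by auto
      then show ?thesis using d20 by simp
    qed
    have thle: "theta x \<le> 0" if "x \<ge> 0" for x
    proof -
      have "theta x \<le> theta 0"
        apply (rule antimono_on_interval[where S="{0..}" and f'=d2 and f=theta and x=0 and y=x])
        using t3 d2le that by auto
      then show ?thesis using th0 cc ths_0 by simp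
    qed
    have "eventually (\<lambda>x. theta x > 1/2) at_top"
      using lt by (rule order_tendstoD) simp
    moreover have "eventually (\<lambda>x. x \<ge> (0::real)) at_top" by simp
    ultimately obtain x where "theta x > 1/2" "x \<ge> 0"
      by (metis (mono_tags, lifting) eventually_conj eventually_happens' trivial_limit_at_top_linorder)
    then show False using thle by force
  qed
  ultimately show ?thesis using c by auto
qed


lemma int_exp:
  fixes L x :: real
  assumes L: "L > 0" and x: "x \<ge> 0"
  shows "((\<lambda>t. exp (L * t)) has_integral (exp (L * x) - 1) / L) {0..x}"
proof -
  have "((\<lambda>t. exp (L * t)) has_integral ((\<lambda>t. exp (L * t) / L) x - (\<lambda>t. exp (L * t) / L) 0)) {0..x}"
  proof (rule fundamental_theorem_of_calculus[OF x])
    fix t assume "t \<in> {0..x}"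
    have "((\<lambda>t. exp (L * t) / L) has_real_derivative exp (L * t)) (at t within {0..x})"
      using L by (auto intro!: derivative_eq_intros)
    then show "((\<lambda>t. exp (L * t) / L) has_vector_derivative exp (L * t)) (at t within {0..x})"
      by (simp add: has_real_derivative_iff_has_vector_derivative)
  qed
  then show ?thesis by (simp add: diff_divide_distrib)
qed

lemma alg_helper:
  fixes E F x n0 C L :: real
  assumes "E * F = 1"
  shows "E * (x * n0 + C * ((F - 1) / L)) = n0 * (E * x) + C / L * (1 - E)"
proof -
  have "E * (C * ((F - 1) / L)) = C / L * (E * F - E)" by (simp add: divide_inverse algebra_simps)
  then show ?thesis using assms by (simp add: algebra_simps)
qed

lemma exp_int_bound:
  fixes f :: "real \<Rightarrow> 'a::banach"
  assumes L: "L > 0" and n0: "n0 \<ge> 0" and C: "C \<ge> 0"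
    and cont: "continuous_on {0..x} f"
    and bd: "\<And>t. t \<in> {0..x} \<Longrightarrow> norm (f t) \<le> n0 + C * exp (L * t)"
  shows "exp (- L * max 0 x) * norm (integral {0..x} f) \<le> (n0 + C) / L"
proof (cases "x \<ge> 0")
  case False
  then have "{0..x} = {}" by auto
  then show ?thesis using L n0 C by simp
next
  case x: True
  have hi: "((\<lambda>t. n0 + C * exp (L * t)) has_integral (x *\<^sub>R n0 + C * ((exp (L * x) - 1) / L))) {0..x}"
    using has_integral_add[OF has_integral_const_real[of n0 0 x] has_integral_mult_right[OF int_exp[OF L x], of C]] x
    by simp
  have "norm (integral {0..x} f) \<le> integral {0..x} (\<lambda>t. n0 + C * exp (L * t))"
    by (rule integral_norm_bound_integral) (use integrable_continuous_real[OF cont] hi bd in auto)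
  also have "\<dots> = x * n0 + C * ((exp (L * x) - 1) / L)" using integral_unique[OF hi] by simp
  finally have I: "norm (integral {0..x} f) \<le> x * n0 + C * ((exp (L * x) - 1) / L)" .
  have e: "exp (- L * x) * exp (L * x) = 1"
    using exp_add[of "- L * x" "L * x", symmetric] by simp
  have ep: "exp (- L * x) > 0" by simp
  have "exp (- L * x) * norm (integral {0..x} f) \<le> exp (- L * x) * (x * n0 + C * ((exp (L * x) - 1) / L))"
    by (rule mult_left_mono[OF I]) (use ep in simp)
  also have "\<dots> = n0 * (exp (- L * x) * x) + C / L * (1 - exp (- L * x))"
    using alg_helper[OF e, of x n0 C L] by simp
  also have "\<dots> \<le> n0 * (1 / L) + C / L * 1"
  proof (rule add_mono)
    have ee: "L * x \<le> exp (L * x) - 1" using exp_ge_add_one_self[of "L * x"] by linarith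
    have "exp (- L * x) * (L * x) \<le> exp (- L * x) * (exp (L * x) - 1)"
      by (rule mult_left_mono) (use ee ep in auto)
    also have "\<dots> = 1 - exp (- L * x)" using e by (simp add: algebra_simps)
    also have "\<dots> \<le> 1" using ep by simp
    finally have "exp (- L * x) * (L * x) \<le> 1" .
    then have "exp (- L * x) * x \<le> 1 / L" using L by (simp add: field_simps)
    then show "n0 * (exp (- L * x) * x) \<le> n0 * (1 / L)" using n0 by (rule mult_left_mono)
    show "C / L * (1 - exp (- L * x)) \<le> C / L * 1" using C L ep by (intro mult_left_mono) auto
  qed
  also have "\<dots> = (n0 + C) / L" by (simp add: add_divide_distrib)
  finally have "exp (- L * x) * norm (integral {0..x} f) \<le> (n0 + C) / L" .
  moreover have "max 0 x = x" using x by simp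
  ultimately show ?thesis by (simp only:)
qed

lemma cont_indef_integral:
  fixes g :: "real \<Rightarrow> 'a::banach"
  assumes cg: "continuous_on UNIV g"
  shows "continuous_on UNIV (\<lambda>x. integral {0..x} g)"
proof (rule continuous_at_imp_continuous_on, intro ballI)
  fix x0 :: real
  define b where "b = \<bar>x0\<bar> + 1"
  have b: "b > 0" unfolding b_def by simp
  have eq: "integral {0..x} g = integral {0..max 0 x} g" for x
    by (cases "x \<ge> 0") auto
  have c1: "continuous_on {0..b} (\<lambda>y. integral {0..y} g)"
    by (rule indefinite_integral_continuous_1[OF integrable_continuous_real])
       (rule continuous_on_subset[OF cg], auto)
  have c2: "continuous_on {-b..b} (\<lambda>x. integral {0..max 0 x} g)"
    by (rule continuous_on_compose2[OF c1]) (use b in \<open>auto intro!: continuous_intros\<close>)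
  then have cc: "continuous_on {-b<..<b} (\<lambda>x. integral {0..x} g)"
    unfolding eq[symmetric] by (rule continuous_on_subset) auto
  have "x0 \<in> interior {-b<..<b}" unfolding b_def by auto
  then show "isCont (\<lambda>x. integral {0..x} g) x0"
    by (rule continuous_on_interior[OF cc])
qed


definition tf :: "('a::banach \<Rightarrow> 'a) \<Rightarrow> 'a \<Rightarrow> real \<Rightarrow> (real \<Rightarrow> 'a) \<Rightarrow> real \<Rightarrow> 'a" where
  "tf G u0 L w x = exp (- L * max 0 x) *\<^sub>R (u0 + integral {0..x} (\<lambda>t. G (exp (L * t) *\<^sub>R w t)))"

lemma lip_cont:
  fixes G :: "'a::real_normed_vector \<Rightarrow> 'b::real_normed_vector"
  assumes lip: "\<And>v v'. norm (G v - G v') \<le> K * norm (v - v')" and K: "K \<ge> 0"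
  shows "continuous_on UNIV G"
proof (rule lipschitz_on_continuous_on)
  show "K-lipschitz_on UNIV G"
    by (rule lipschitz_onI) (use lip K in \<open>auto simp: dist_norm\<close>)
qed

lemma integrand_cont:
  fixes G :: "'a::banach \<Rightarrow> 'a"
  assumes cG: "continuous_on UNIV G" and cw: "continuous_on UNIV w"
  shows "continuous_on UNIV (\<lambda>t. G (exp (L * t) *\<^sub>R w t))"
  by (rule continuous_on_compose2[OF cG]) (auto intro!: continuous_intros cw)

lemma tf_cont:
  fixes G :: "'a::banach \<Rightarrow> 'a"
  assumes cG: "continuous_on UNIV G" and cw: "continuous_on UNIV w"
  shows "continuous_on UNIV (tf G u0 L w)"
proof -
  have ci: "continuous_on UNIV (\<lambda>x. integral {0..x} (\<lambda>t. G (exp (L * t) *\<^sub>R w t)))"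
    by (rule cont_indef_integral[OF integrand_cont[OF cG cw]])
  show ?thesis unfolding tf_def[abs_def]
    by (intro continuous_intros ci)
qed

lemma tf_bound:
  fixes G :: "'a::banach \<Rightarrow> 'a"
  assumes lip: "\<And>v v'. norm (G v - G v') \<le> K * norm (v - v')" and K: "K \<ge> 0" and L: "L > 0"
    and cw: "continuous_on UNIV w" and B: "\<And>t. norm (w t) \<le> B"
  shows "norm (tf G u0 L w x) \<le> norm u0 + (norm (G 0) + K * B) / L"
proof -
  have cG: "continuous_on UNIV G" by (rule lip_cont[OF lip K])
  have B0: "B \<ge> 0" using B[of 0] norm_ge_zero order_trans by blast
  define I where "I = integral {0..x} (\<lambda>t. G (exp (L * t) *\<^sub>R w t))"
  have bI: "exp (- L * max 0 x) * norm I \<le> (norm (G 0) + K * B) / L"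
    unfolding I_def
  proof (rule exp_int_bound[OF L])
    show "0 \<le> norm (G 0)" by simp
    show "0 \<le> K * B" using K B0 by simp
    show "continuous_on {0..x} (\<lambda>t. G (exp (L * t) *\<^sub>R w t))"
      using integrand_cont[OF cG cw] continuous_on_subset by blast
    fix t
    have "norm (G (exp (L * t) *\<^sub>R w t)) \<le> norm (G 0) + norm (G (exp (L * t) *\<^sub>R w t) - G 0)"
      by (metis add.commute diff_add_cancel norm_triangle_ineq)
    also have "\<dots> \<le> norm (G 0) + K * norm (exp (L * t) *\<^sub>R w t)"
      using lip[of "exp (L * t) *\<^sub>R w t" 0] by simp
    also have "\<dots> = norm (G 0) + K * (exp (L * t) * norm (w t))" by simp
    also have "\<dots> \<le> norm (G 0) + K * (exp (L * t) * B)"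
      using B[of t] K by (simp add: mult_left_mono)
    finally show "norm (G (exp (L * t) *\<^sub>R w t)) \<le> norm (G 0) + K * B * exp (L * t)"
      by (simp add: algebra_simps)
  qed
  have e1: "exp (- L * max 0 x) \<le> 1" using L by simp
  have "norm (tf G u0 L w x) = exp (- L * max 0 x) * norm (u0 + I)"
    unfolding tf_def I_def by simp
  also have "\<dots> \<le> exp (- L * max 0 x) * (norm u0 + norm I)"
    by (rule mult_left_mono) (auto intro: norm_triangle_ineq)
  also have "\<dots> = exp (- L * max 0 x) * norm u0 + exp (- L * max 0 x) * norm I"
    by (simp add: algebra_simps)
  also have "\<dots> \<le> norm u0 + (norm (G 0) + K * B) / L"
    using bI e1 mult_right_mono[OF e1, of "norm u0"] by simp
  finally show ?thesis .
qed

lemma tf_diff: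
  fixes G :: "'a::banach \<Rightarrow> 'a"
  assumes lip: "\<And>v v'. norm (G v - G v') \<le> K * norm (v - v')" and K: "K \<ge> 0" and L: "L > 0"
    and cw1: "continuous_on UNIV w1" and cw2: "continuous_on UNIV w2"
    and D: "\<And>t. norm (w1 t - w2 t) \<le> D"
  shows "norm (tf G u0 L w1 x - tf G u0 L w2 x) \<le> K * D / L"
proof -
  have cG: "continuous_on UNIV G" by (rule lip_cont[OF lip K])
  have D0: "D \<ge> 0" using D[of 0] norm_ge_zero order_trans by blast
  define g1 where "g1 = (\<lambda>t. G (exp (L * t) *\<^sub>R w1 t))"
  define g2 where "g2 = (\<lambda>t. G (exp (L * t) *\<^sub>R w2 t))"
  have c1: "continuous_on {0..x} g1" unfolding g1_def
    using integrand_cont[OF cG cw1] continuous_on_subset by blast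
  have c2: "continuous_on {0..x} g2" unfolding g2_def
    using integrand_cont[OF cG cw2] continuous_on_subset by blast
  have ieq: "integral {0..x} g1 - integral {0..x} g2 = integral {0..x} (\<lambda>t. g1 t - g2 t)"
    using Henstock_Kurzweil_Integration.integral_diff[OF integrable_continuous_real[OF c1] integrable_continuous_real[OF c2]]
    by simp
  have bI: "exp (- L * max 0 x) * norm (integral {0..x} (\<lambda>t. g1 t - g2 t)) \<le> (0 + K * D) / L"
  proof (rule exp_int_bound[OF L])
    show "0 \<le> K * D" using K D0 by simp
    show "continuous_on {0..x} (\<lambda>t. g1 t - g2 t)" using c1 c2 by (intro continuous_intros)
    fix t
    have "norm (g1 t - g2 t) \<le> K * norm (exp (L * t) *\<^sub>R w1 t - exp (L * t) *\<^sub>R w2 t)"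
      unfolding g1_def g2_def by (rule lip)
    also have "\<dots> = K * (exp (L * t) * norm (w1 t - w2 t))"
      by (simp add: scaleR_diff_right[symmetric])
    also have "\<dots> \<le> K * (exp (L * t) * D)"
      using D[of t] K by (simp add: mult_left_mono)
    finally show "norm (g1 t - g2 t) \<le> 0 + K * D * exp (L * t)"
      by (simp add: algebra_simps)
  qed simp
  have "tf G u0 L w1 x - tf G u0 L w2 x = exp (- L * max 0 x) *\<^sub>R (integral {0..x} g1 - integral {0..x} g2)"
    unfolding tf_def g1_def g2_def by (simp add: algebra_simps)
  then have "norm (tf G u0 L w1 x - tf G u0 L w2 x) = exp (- L * max 0 x) * norm (integral {0..x} (\<lambda>t. g1 t - g2 t))"
    using ieq by simp
  then show ?thesis using bI by simp
qed

lemma tf_param: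
  fixes G1 G2 :: "'a::banach \<Rightarrow> 'a"
  assumes cG1: "continuous_on UNIV G1" and cG2: "continuous_on UNIV G2" and L: "L > 0"
    and cw: "continuous_on UNIV w" and B: "\<And>t. norm (w t) \<le> B"
    and beta: "\<And>v. norm (G1 v - G2 v) \<le> \<beta> * norm v" and b0: "\<beta> \<ge> 0"
  shows "norm (tf G1 u1 L w x - tf G2 u2 L w x) \<le> norm (u1 - u2) + \<beta> * B / L"
proof -
  have B0: "B \<ge> 0" using B[of 0] norm_ge_zero order_trans by blast
  define g1 where "g1 = (\<lambda>t. G1 (exp (L * t) *\<^sub>R w t))"
  define g2 where "g2 = (\<lambda>t. G2 (exp (L * t) *\<^sub>R w t))"
  have c1: "continuous_on {0..x} g1" unfolding g1_def
    using integrand_cont[OF cG1 cw] continuous_on_subset by blast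
  have c2: "continuous_on {0..x} g2" unfolding g2_def
    using integrand_cont[OF cG2 cw] continuous_on_subset by blast
  have ieq: "integral {0..x} g1 - integral {0..x} g2 = integral {0..x} (\<lambda>t. g1 t - g2 t)"
    using Henstock_Kurzweil_Integration.integral_diff[OF integrable_continuous_real[OF c1] integrable_continuous_real[OF c2]]
    by simp
  have bI: "exp (- L * max 0 x) * norm (integral {0..x} (\<lambda>t. g1 t - g2 t)) \<le> (0 + \<beta> * B) / L"
  proof (rule exp_int_bound[OF L])
    show "0 \<le> \<beta> * B" using b0 B0 by simp
    show "continuous_on {0..x} (\<lambda>t. g1 t - g2 t)" using c1 c2 by (intro continuous_intros)
    fix t
    have "norm (g1 t - g2 t) \<le> \<beta> * norm (exp (L * t) *\<^sub>R w t)"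
      unfolding g1_def g2_def by (rule beta)
    also have "\<dots> = \<beta> * (exp (L * t) * norm (w t))" by simp
    also have "\<dots> \<le> \<beta> * (exp (L * t) * B)"
      using B[of t] b0 by (simp add: mult_left_mono)
    finally show "norm (g1 t - g2 t) \<le> 0 + \<beta> * B * exp (L * t)"
      by (simp add: algebra_simps)
  qed simp
  have e1: "exp (- L * max 0 x) \<le> 1" using L by simp
  have "tf G1 u1 L w x - tf G2 u2 L w x = exp (- L * max 0 x) *\<^sub>R ((u1 - u2) + (integral {0..x} g1 - integral {0..x} g2))"
    unfolding tf_def g1_def g2_def by (simp add: algebra_simps)
  then have "norm (tf G1 u1 L w x - tf G2 u2 L w x) \<le> exp (- L * max 0 x) * (norm (u1 - u2) + norm (integral {0..x} (\<lambda>t. g1 t - g2 t)))"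
    using ieq by (simp add: mult_left_mono norm_triangle_ineq)
  also have "\<dots> = exp (- L * max 0 x) * norm (u1 - u2) + exp (- L * max 0 x) * norm (integral {0..x} (\<lambda>t. g1 t - g2 t))"
    by (simp add: algebra_simps)
  also have "\<dots> \<le> norm (u1 - u2) + \<beta> * B / L"
    using bI mult_right_mono[OF e1, of "norm (u1 - u2)"] by simp
  finally show ?thesis .
qed


definition Tc :: "('a::banach \<Rightarrow> 'a) \<Rightarrow> 'a \<Rightarrow> real \<Rightarrow> (real \<Rightarrow>\<^sub>C 'a) \<Rightarrow> (real \<Rightarrow>\<^sub>C 'a)" where
  "Tc G u0 L w = Bcontfun (tf G u0 L (apply_bcontfun w))"

definition fp :: "('a::banach \<Rightarrow> 'a) \<Rightarrow> 'a \<Rightarrow> real \<Rightarrow> (real \<Rightarrow>\<^sub>C 'a)" where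
  "fp G u0 L = (THE w. Tc G u0 L w = w)"

definition usol :: "('a::banach \<Rightarrow> 'a) \<Rightarrow> 'a \<Rightarrow> real \<Rightarrow> real \<Rightarrow> 'a" where
  "usol G u0 L x = exp (L * x) *\<^sub>R apply_bcontfun (fp G u0 L) x"

lemma Tc_apply:
  fixes G :: "'a::banach \<Rightarrow> 'a"
  assumes lip: "\<And>v v'. norm (G v - G v') \<le> K * norm (v - v')" and K: "K \<ge> 0" and L: "L > 0"
  shows "apply_bcontfun (Tc G u0 L w) = tf G u0 L (apply_bcontfun w)"
proof -
  have "tf G u0 L (apply_bcontfun w) \<in> bcontfun"
  proof (rule bcontfun_normI)
    show "continuous_on UNIV (tf G u0 L (apply_bcontfun w))"
      by (rule tf_cont[OF lip_cont[OF lip K]]) simp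
    fix x show "norm (tf G u0 L (apply_bcontfun w) x) \<le> norm u0 + (norm (G 0) + K * norm w) / L"
      by (rule tf_bound[OF lip K L]) (auto intro: norm_bounded)
  qed
  then show ?thesis unfolding Tc_def by (rule Bcontfun_inverse)
qed

lemma Tc_contr:
  fixes G :: "'a::banach \<Rightarrow> 'a"
  assumes lip: "\<And>v v'. norm (G v - G v') \<le> K * norm (v - v')" and K: "K \<ge> 0" and L: "L > 0"
    and LK: "2 * K \<le> L"
  shows "dist (Tc G u0 L w1) (Tc G u0 L w2) \<le> 1/2 * dist w1 w2"
proof (rule dist_bound)
  fix x
  have "dist (Tc G u0 L w1 x) (Tc G u0 L w2 x) = norm (tf G u0 L w1 x - tf G u0 L w2 x)"
    by (simp add: Tc_apply[OF lip K L] dist_norm)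
  also have "\<dots> \<le> K * dist w1 w2 / L"
    by (rule tf_diff[OF lip K L]) (auto simp: dist_norm[symmetric] intro: dist_bounded)
  also have "\<dots> \<le> 1/2 * dist w1 w2"
  proof -
    have "K / L \<le> 1/2" using LK L by (simp add: field_simps)
    then have "K / L * dist w1 w2 \<le> 1/2 * dist w1 w2" by (rule mult_right_mono) simp
    then show ?thesis by simp
  qed
  finally show "dist (Tc G u0 L w1 x) (Tc G u0 L w2 x) \<le> 1/2 * dist w1 w2" .
qed

lemma fp_eq:
  fixes G :: "'a::banach \<Rightarrow> 'a"
  assumes lip: "\<And>v v'. norm (G v - G v') \<le> K * norm (v - v')" and K: "K \<ge> 0" and L: "L > 0"
    and LK: "2 * K \<le> L"
  shows "Tc G u0 L (fp G u0 L) = fp G u0 L"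
proof -
  have "\<exists>!w. Tc G u0 L w = w"
    by (rule banach_fix_type[of "1/2"]) (use Tc_contr[OF lip K L LK] in auto)
  then show ?thesis unfolding fp_def by (rule theI')
qed

lemma usol_cont: "continuous_on UNIV (usol G u0 L)"
  unfolding usol_def[abs_def] by (intro continuous_intros) auto

lemma usol_int:
  fixes G :: "'a::banach \<Rightarrow> 'a"
  assumes lip: "\<And>v v'. norm (G v - G v') \<le> K * norm (v - v')" and K: "K \<ge> 0" and L: "L > 0"
    and LK: "2 * K \<le> L" and x: "x \<ge> 0"
  shows "usol G u0 L x = u0 + integral {0..x} (\<lambda>t. G (usol G u0 L t))"
proof -
  have "apply_bcontfun (fp G u0 L) x = apply_bcontfun (Tc G u0 L (fp G u0 L)) x"
    using fp_eq[OF lip K L LK] by simp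
  also have "\<dots> = tf G u0 L (fp G u0 L) x" by (simp add: Tc_apply[OF lip K L])
  finally have "apply_bcontfun (fp G u0 L) x = exp (- L * x) *\<^sub>R (u0 + integral {0..x} (\<lambda>t. G (usol G u0 L t)))"
    unfolding tf_def usol_def using x by simp
  then have "usol G u0 L x = (exp (L * x) * exp (- L * x)) *\<^sub>R (u0 + integral {0..x} (\<lambda>t. G (usol G u0 L t)))"
    unfolding usol_def by simp
  also have "exp (L * x) * exp (- L * x) = 1" by (simp add: exp_add[symmetric])
  finally show ?thesis by simp
qed

lemma usol_deriv:
  fixes G :: "'a::banach \<Rightarrow> 'a"
  assumes lip: "\<And>v v'. norm (G v - G v') \<le> K * norm (v - v')" and K: "K \<ge> 0" and L: "L > 0"
    and LK: "2 * K \<le> L" and x: "x \<ge> 0"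
  shows "(usol G u0 L has_vector_derivative G (usol G u0 L x)) (at x within {0..})"
proof -
  let ?u = "usol G u0 L"
  have cGu: "continuous_on UNIV (\<lambda>t. G (?u t))"
    by (rule continuous_on_compose2[OF lip_cont[OF lip K] usol_cont]) auto
  have d0: "((\<lambda>y. integral {0..y} (\<lambda>t. G (?u t))) has_vector_derivative G (?u x)) (at x within {0..x+1})"
    by (rule integral_has_vector_derivative) (use cGu continuous_on_subset x in auto)
  have d1: "((\<lambda>y. u0 + integral {0..y} (\<lambda>t. G (?u t))) has_vector_derivative G (?u x)) (at x within {0..x+1})"
    using has_vector_derivative_add[OF has_vector_derivative_const[of u0] d0] by simp
  have "at x within {0..x+1} = at x within {0..}"
    by (rule at_within_nhd[where S="{..<x+1}"]) auto
  then have d2: "((\<lambda>y. u0 + integral {0..y} (\<lambda>t. G (?u t))) has_vector_derivative G (?u x)) (at x within {0..})"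
    using d1 by simp
  show ?thesis
    by (rule has_vector_derivative_transform_within[OF d2, of 1]) (use x usol_int[OF lip K L LK] in auto)
qed

lemma fp_param:
  fixes G1 G2 :: "'a::banach \<Rightarrow> 'a"
  assumes lip1: "\<And>v v'. norm (G1 v - G1 v') \<le> K * norm (v - v')"
    and lip2: "\<And>v v'. norm (G2 v - G2 v') \<le> K * norm (v - v')"
    and K: "K \<ge> 0" and L: "L > 0" and LK: "2 * K \<le> L"
    and beta: "\<And>v. norm (G1 v - G2 v) \<le> \<beta> * norm v" and b0: "\<beta> \<ge> 0"
  shows "dist (fp G1 u1 L) (fp G2 u2 L) \<le> 2 * (norm (u1 - u2) + \<beta> * norm (fp G1 u1 L) / L)"
proof -
  let ?w1 = "fp G1 u1 L" and ?w2 = "fp G2 u2 L"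
  have "dist ?w1 ?w2 = dist (Tc G1 u1 L ?w1) (Tc G2 u2 L ?w2)"
    using fp_eq[OF lip1 K L LK] fp_eq[OF lip2 K L LK] by simp
  also have "\<dots> \<le> dist (Tc G1 u1 L ?w1) (Tc G2 u2 L ?w1) + dist (Tc G2 u2 L ?w1) (Tc G2 u2 L ?w2)"
    by (rule dist_triangle)
  also have "dist (Tc G2 u2 L ?w1) (Tc G2 u2 L ?w2) \<le> 1/2 * dist ?w1 ?w2"
    by (rule Tc_contr[OF lip2 K L LK])
  also have "dist (Tc G1 u1 L ?w1) (Tc G2 u2 L ?w1) \<le> norm (u1 - u2) + \<beta> * norm ?w1 / L"
  proof (rule dist_bound)
    fix x
    have "dist (Tc G1 u1 L ?w1 x) (Tc G2 u2 L ?w1 x) = norm (tf G1 u1 L ?w1 x - tf G2 u2 L ?w1 x)"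
      by (simp add: Tc_apply[OF lip1 K L] Tc_apply[OF lip2 K L] dist_norm)
    also have "\<dots> \<le> norm (u1 - u2) + \<beta> * norm ?w1 / L"
      by (rule tf_param[OF lip_cont[OF lip1 K] lip_cont[OF lip2 K] L _ _ beta b0]) (auto intro: norm_bounded)
    finally show "dist (Tc G1 u1 L ?w1 x) (Tc G2 u2 L ?w1 x) \<le> norm (u1 - u2) + \<beta> * norm ?w1 / L" .
  qed
  finally show ?thesis by simp
qed


definition clamp01 :: "real \<Rightarrow> real" where "clamp01 t = max 0 (min 1 t)"

definition Gf :: "(real \<Rightarrow> real) \<Rightarrow> real \<Rightarrow> real \<times> real \<Rightarrow> real \<times> real" where
  "Gf Psi a v = (snd v, a * snd v - Psi (clamp01 (fst v)))"

lemma clamp01_in: "clamp01 t \<in> {0..1}" unfolding clamp01_def by auto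

lemma clamp01_id: "t \<in> {0..1} \<Longrightarrow> clamp01 t = t" unfolding clamp01_def by auto

lemma clamp01_lip: "\<bar>clamp01 s - clamp01 t\<bar> \<le> \<bar>s - t\<bar>" unfolding clamp01_def by auto

lemma fst_vd:
  assumes "(u has_vector_derivative v) F"
  shows "((\<lambda>x. fst (u x)) has_real_derivative fst v) F"
proof -
  have "((\<lambda>x. fst (u x)) has_derivative (\<lambda>h. fst (h *\<^sub>R v))) F"
    using has_derivative_fst[OF assms[unfolded has_vector_derivative_def]] .
  moreover have "(\<lambda>h. fst (h *\<^sub>R v)) = (*) (fst v)" by (auto simp: mult.commute)
  ultimately show ?thesis by (simp add: has_field_derivative_def)
qed

lemma snd_vd:
  assumes "(u has_vector_derivative v) F"
  shows "((\<lambda>x. snd (u x)) has_real_derivative snd v) F"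
proof -
  have "((\<lambda>x. snd (u x)) has_derivative (\<lambda>h. snd (h *\<^sub>R v))) F"
    using has_derivative_snd[OF assms[unfolded has_vector_derivative_def]] .
  moreover have "(\<lambda>h. snd (h *\<^sub>R v)) = (*) (snd v)" by (auto simp: mult.commute)
  ultimately show ?thesis by (simp add: has_field_derivative_def)
qed

lemma abs_fst_le: "\<bar>fst v\<bar> \<le> norm (v :: real \<times> real)"
  using norm_fst_le[of "fst v" "snd v"] by simp

lemma abs_snd_le: "\<bar>snd v\<bar> \<le> norm (v :: real \<times> real)"
  using norm_snd_le[of "snd v" "fst v"] by simp

lemma Gf_lip:
  assumes lip: "\<And>s t. s \<in> {0..1} \<Longrightarrow> t \<in> {0..1} \<Longrightarrow> \<bar>Psi s - Psi t\<bar> \<le> Lp * \<bar>s - t\<bar>"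
    and Lp: "Lp \<ge> 0" and a: "0 \<le> a" "a \<le> A"
  shows "norm (Gf Psi a v - Gf Psi a w) \<le> (1 + A + Lp) * norm (v - w)"
proof -
  have dP: "\<bar>Psi (clamp01 (fst v)) - Psi (clamp01 (fst w))\<bar> \<le> Lp * norm (v - w)"
  proof -
    have "\<bar>Psi (clamp01 (fst v)) - Psi (clamp01 (fst w))\<bar> \<le> Lp * \<bar>clamp01 (fst v) - clamp01 (fst w)\<bar>"
      by (rule lip) (rule clamp01_in)+
    also have "\<dots> \<le> Lp * \<bar>fst v - fst w\<bar>" using Lp clamp01_lip by (rule mult_left_mono[rotated])
    also have "\<dots> \<le> Lp * norm (v - w)" using Lp abs_fst_le[of "v - w"] by (simp add: mult_left_mono)
    finally show ?thesis .
  qed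
  have s: "\<bar>snd v - snd w\<bar> \<le> norm (v - w)" using abs_snd_le[of "v - w"] by simp
  have "Gf Psi a v - Gf Psi a w = (snd v - snd w, a * (snd v - snd w) - (Psi (clamp01 (fst v)) - Psi (clamp01 (fst w))))"
    unfolding Gf_def by (simp add: algebra_simps)
  then have "norm (Gf Psi a v - Gf Psi a w) \<le> \<bar>snd v - snd w\<bar> + \<bar>a * (snd v - snd w) - (Psi (clamp01 (fst v)) - Psi (clamp01 (fst w)))\<bar>"
    using norm_Pair_le by (metis real_norm_def)
  also have "\<dots> \<le> \<bar>snd v - snd w\<bar> + (a * \<bar>snd v - snd w\<bar> + \<bar>Psi (clamp01 (fst v)) - Psi (clamp01 (fst w))\<bar>)"
  proof -
    have "\<bar>a * (snd v - snd w) - (Psi (clamp01 (fst v)) - Psi (clamp01 (fst w)))\<bar> \<le> \<bar>a * (snd v - snd w)\<bar> + \<bar>Psi (clamp01 (fst v)) - Psi (clamp01 (fst w))\<bar>"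
      by (rule abs_triangle_ineq4)
    moreover have "\<bar>a * (snd v - snd w)\<bar> = a * \<bar>snd v - snd w\<bar>" using a by (simp add: abs_mult)
    ultimately show ?thesis by simp
  qed
  also have "\<dots> \<le> norm (v - w) + (A * norm (v - w) + Lp * norm (v - w))"
    using s dP a by (intro add_mono mult_mono) auto
  also have "\<dots> = (1 + A + Lp) * norm (v - w)" by (simp add: algebra_simps)
  finally show ?thesis .
qed

lemma Gf_param: "norm (Gf Psi a1 v - Gf Psi a2 v) \<le> \<bar>a1 - a2\<bar> * norm v"
proof -
  have "Gf Psi a1 v - Gf Psi a2 v = (0, (a1 - a2) * snd v)" unfolding Gf_def by (simp add: algebra_simps)
  then have "norm (Gf Psi a1 v - Gf Psi a2 v) = \<bar>a1 - a2\<bar> * \<bar>snd v\<bar>" by (simp add: abs_mult)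
  also have "\<dots> \<le> \<bar>a1 - a2\<bar> * norm v" using abs_snd_le[of v] by (simp add: mult_left_mono)
  finally show ?thesis .
qed


locale prob =
  fixes eta Qg Qp cmax Lp :: real and Psi theta_s :: "real \<Rightarrow> real"
  assumes eta_pos: "eta > 0" and Qg_pos: "Qg > 0" and Qp_gt: "Qp > - Qg"
    and Psi_pos: "\<forall>t\<in>{0..<1}. Psi t > 0" and Psi_1: "Psi 1 = 0"
    and cmax_neg: "cmax < 0"
    and ths_cont: "continuous_on {cmax..0} theta_s"
    and ths_decr: "strict_antimono_on {cmax..0} theta_s"
    and ths_0: "theta_s 0 = 0" and ths_cmax: "theta_s cmax = 1"
    and Lp: "Lp \<ge> 0"
    and lipP: "\<And>s t. s \<in> {0..1} \<Longrightarrow> t \<in> {0..1} \<Longrightarrow> \<bar>Psi s - Psi t\<bar> \<le> Lp * \<bar>s - t\<bar>"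

context prob
begin

abbreviation "KK \<equiv> 1 + (- eta * cmax) + Lp"
abbreviation "Lam \<equiv> 2 * KK"
abbreviation "kq \<equiv> Qp / (Qp + Qg)"
abbreviation "u0 c \<equiv> (theta_s c, (- eta * c) * (theta_s c - kq))"
abbreviation "GG c \<equiv> Gf Psi (- eta * c)"
abbreviation "W c \<equiv> fp (GG c) (u0 c) Lam"
abbreviation "U c \<equiv> usol (GG c) (u0 c) Lam"

lemma KK_pos: "KK > 0" "Lam > 0" "KK \<ge> 0" "2 * KK \<le> Lam"
proof -
  have h: "eta * cmax < 0" using eta_pos cmax_neg by (simp add: mult_pos_neg)
  show "KK > 0" using h Lp by simp
  show "Lam > 0" using h Lp by simp
  show "KK \<ge> 0" using h Lp by simp
  show "2 * KK \<le> Lam" by simp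
qed

lemma lipG:
  assumes c: "c \<in> {cmax..0}"
  shows "norm (GG c v - GG c w) \<le> KK * norm (v - w)"
proof (rule Gf_lip[OF lipP Lp])
  show "0 \<le> - eta * c" using c eta_pos by (simp add: mult_nonneg_nonpos)
  show "- eta * c \<le> - eta * cmax" using c eta_pos by simp
qed simp_all

lemma U_deriv:
  assumes c: "c \<in> {cmax..0}" and x: "x \<ge> 0"
  shows "(U c has_vector_derivative GG c (U c x)) (at x within {0..})"
  by (rule usol_deriv[OF lipG[OF c] KK_pos(3) KK_pos(2) KK_pos(4) x])

lemma th_deriv:
  assumes c: "c \<in> {cmax..0}" and x: "x \<ge> 0"
  shows "((\<lambda>x. fst (U c x)) has_real_derivative snd (U c x)) (at x within {0..})"
  using fst_vd[OF U_deriv[OF c x]] by (simp add: Gf_def)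

lemma pp_deriv:
  assumes c: "c \<in> {cmax..0}" and x: "x \<ge> 0"
  shows "((\<lambda>x. snd (U c x)) has_real_derivative (- eta * c) * snd (U c x) - Psi (clamp01 (fst (U c x)))) (at x within {0..})"
  using snd_vd[OF U_deriv[OF c x]] by (simp add: Gf_def)

lemma U_0:
  assumes c: "c \<in> {cmax..0}"
  shows "U c 0 = u0 c"
  using usol_int[OF lipG[OF c] KK_pos(3) KK_pos(2) KK_pos(4), of 0] by simp

lemma U_cont: "continuous_on UNIV (U c)"
  by (rule usol_cont)

lemma th_cont: "isCont (\<lambda>x. fst (U c x)) x"
  using U_cont[of c] by (auto intro!: continuous_intros simp: continuous_on_eq_continuous_at)

lemma pp_cont: "isCont (\<lambda>x. snd (U c x)) x"
  using U_cont[of c] by (auto intro!: continuous_intros simp: continuous_on_eq_continuous_at)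

lemma W_close:
  assumes c: "c \<in> {cmax..0}" and e: "e > 0"
  shows "\<exists>d>0. \<forall>c'\<in>{cmax..0}. dist c' c < d \<longrightarrow> dist (W c') (W c) < e"
proof -
  define N where "N = norm (W c)"
  define NL where "NL = N / Lam"
  define phi where "phi c' = 2 * (norm (u0 c - u0 c') + eta * \<bar>c - c'\<bar> * NL)" for c'
  have bound: "dist (W c') (W c) \<le> phi c'" if c': "c' \<in> {cmax..0}" for c'
  proof -
    have "dist (W c) (W c') \<le> 2 * (norm (u0 c - u0 c') + \<bar>- eta * c - - eta * c'\<bar> * norm (W c) / Lam)"
      by (rule fp_param[OF lipG[OF c] lipG[OF c'] KK_pos(3) KK_pos(2) KK_pos(4) Gf_param]) simp
    also have "\<bar>- eta * c - - eta * c'\<bar> = eta * \<bar>c - c'\<bar>"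
    proof -
      have "\<bar>- eta * c - - eta * c'\<bar> = \<bar>eta * (c' - c)\<bar>" by (simp add: algebra_simps)
      also have "\<dots> = eta * \<bar>c - c'\<bar>" using eta_pos by (simp add: abs_mult abs_minus_commute)
      finally show ?thesis .
    qed
    finally show ?thesis unfolding phi_def N_def NL_def by (simp add: dist_commute)
  qed
  have cu: "continuous_on {cmax..0} (\<lambda>c'. u0 c')"
    using ths_cont by (auto intro!: continuous_intros)
  have cphi: "continuous_on {cmax..0} phi" unfolding phi_def
    using cu ths_cont by (auto intro!: continuous_intros)
  have phic: "phi c = 0" unfolding phi_def by simp
  obtain d where d: "d > 0" "\<And>c'. c' \<in> {cmax..0} \<Longrightarrow> dist c' c < d \<Longrightarrow> dist (phi c') (phi c) < e"
    using cphi c e unfolding continuous_on_iff by blast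
  show ?thesis
  proof (intro exI[of _ d] conjI ballI impI)
    fix c' assume c': "c' \<in> {cmax..0}" "dist c' c < d"
    have "phi c' < e" using d(2)[OF c'] phic by (simp add: dist_real_def)
    then show "dist (W c') (W c) < e" using bound[OF c'(1)] by simp
  qed (use d in simp)
qed

lemma U_close:
  assumes dW: "dist (W c') (W c) < m / exp (Lam * x)" and z: "0 \<le> z" "z \<le> x"
  shows "norm (U c' z - U c z) < m"
proof -
  have "U c' z - U c z = exp (Lam * z) *\<^sub>R (W c' z - W c z)"
    unfolding usol_def by (simp add: scaleR_diff_right)
  then have "norm (U c' z - U c z) = exp (Lam * z) * dist (W c' z) (W c z)"
    by (simp add: dist_norm)
  also have "\<dots> \<le> exp (Lam * x) * dist (W c') (W c)"
    using KK_pos z by (intro mult_mono dist_bounded) auto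
  also have "\<dots> < m"
    using dW by (simp add: pos_less_divide_eq mult.commute)
  finally show ?thesis .
qed

end


lemma cont_lt:
  fixes f :: "real \<Rightarrow> real"
  assumes "isCont f x" "f x < r"
  shows "\<exists>d>0. \<forall>y. dist y x < d \<longrightarrow> f y < r"
proof -
  obtain d where d: "d > 0" "\<forall>y. dist y x < d \<longrightarrow> dist (f y) (f x) < r - f x"
    using assms continuous_at_eps_delta[of x f] by (metis diff_gt_0_iff_gt)
  show ?thesis
  proof (rule exI[of _ d], intro conjI allI impI)
    fix y assume "dist y x < d"
    then have "\<bar>f y - f x\<bar> < r - f x" using d by (simp add: dist_real_def)
    then show "f y < r" by linarith
  qed (use d in simp)
qed

lemma cont_gt:
  fixes f :: "real \<Rightarrow> real"
  assumes "isCont f x" "f x > r"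
  shows "\<exists>d>0. \<forall>y. dist y x < d \<longrightarrow> f y > r"
proof -
  obtain d where d: "d > 0" "\<forall>y. dist y x < d \<longrightarrow> dist (f y) (f x) < f x - r"
    using assms continuous_at_eps_delta[of x f] by (metis diff_gt_0_iff_gt)
  show ?thesis
  proof (rule exI[of _ d], intro conjI allI impI)
    fix y assume "dist y x < d"
    then have "\<bar>f y - f x\<bar> < f x - r" using d by (simp add: dist_real_def)
    then show "f y > r" by linarith
  qed (use d in simp)
qed

lemma left_lim_ge:
  fixes f :: "real \<Rightarrow> real"
  assumes "isCont f s" "s > 0" "\<And>y. 0 \<le> y \<Longrightarrow> y < s \<Longrightarrow> f y > r"
  shows "f s \<ge> r"
proof (rule ccontr)
  assume "\<not> f s \<ge> r"
  then have "f s < r" by simp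
  from cont_lt[OF assms(1) this] obtain d where d: "d > 0" "\<And>y. dist y s < d \<Longrightarrow> f y < r"
    by blast
  define y where "y = max 0 (s - d/2)"
  have "0 \<le> y" "y < s" "dist y s < d" unfolding y_def using d assms(2)
    by (auto simp: dist_real_def)
  then show False using d(2) assms(3) by force
qed

lemma left_lim_le:
  fixes f :: "real \<Rightarrow> real"
  assumes "isCont f s" "s > 0" "\<And>y. 0 \<le> y \<Longrightarrow> y < s \<Longrightarrow> f y < r"
  shows "f s \<le> r"
proof (rule ccontr)
  assume "\<not> f s \<le> r"
  then have "f s > r" by simp
  from cont_gt[OF assms(1) this] obtain d where d: "d > 0" "\<And>y. dist y s < d \<Longrightarrow> f y > r"
    by blast
  define y where "y = max 0 (s - d/2)"
  have "0 \<le> y" "y < s" "dist y s < d" unfolding y_def using d assms(2)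
    by (auto simp: dist_real_def)
  then show False using d(2) assms(3) by force
qed

lemma max_on:
  fixes f :: "real \<Rightarrow> real"
  assumes "continuous_on {0..x} f" "x \<ge> 0" "\<forall>y\<in>{0..x}. f y < r"
  shows "\<exists>M<r. \<forall>y\<in>{0..x}. f y \<le> M"
proof -
  obtain z where "z \<in> {0..x}" "\<forall>y\<in>{0..x}. f y \<le> f z"
    using continuous_attains_sup[of "{0..x}" f] assms by auto
  then show ?thesis using assms(3) by blast
qed

lemma min_on:
  fixes f :: "real \<Rightarrow> real"
  assumes "continuous_on {0..x} f" "x \<ge> 0" "\<forall>y\<in>{0..x}. f y > r"
  shows "\<exists>m>r. \<forall>y\<in>{0..x}. f y \<ge> m"
proof -
  obtain z where "z \<in> {0..x}" "\<forall>y\<in>{0..x}. f z \<le> f y"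
    using continuous_attains_inf[of "{0..x}" f] assms by auto
  then show ?thesis using assms(3) by blast
qed

context prob
begin

abbreviation inA :: "real \<Rightarrow> bool" where
  "inA c \<equiv> \<exists>x\<ge>0. snd (U c x) < 0 \<and> (\<forall>y\<in>{0..x}. fst (U c y) < 1)"
abbreviation inB :: "real \<Rightarrow> bool" where
  "inB c \<equiv> \<exists>x\<ge>0. fst (U c x) > 1 \<and> (\<forall>y\<in>{0..x}. snd (U c y) > 0)"

lemma AB_disj: "\<not> (inA c \<and> inB c)"
proof
  assume "inA c \<and> inB c"
  then obtain x1 x2 where A: "x1 \<ge> 0" "snd (U c x1) < 0" "\<forall>y\<in>{0..x1}. fst (U c y) < 1"
    and B: "x2 \<ge> 0" "fst (U c x2) > 1" "\<forall>y\<in>{0..x2}. snd (U c y) > 0" by blast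
  show False
  proof (cases "x2 \<le> x1")
    case True then show False using A B by force
  next
    case False then show False using A B by force
  qed
qed

lemma th_cont_on: "continuous_on S (\<lambda>x. fst (U c x))"
  using th_cont by (simp add: continuous_at_imp_continuous_on)

lemma pp_cont_on: "continuous_on S (\<lambda>x. snd (U c x))"
  using pp_cont by (simp add: continuous_at_imp_continuous_on)

lemma A_open:
  assumes c: "c \<in> {cmax..0}" and A: "inA c"
  shows "\<exists>d>0. \<forall>c'\<in>{cmax..0}. dist c' c < d \<longrightarrow> inA c'"
proof -
  from A obtain x where x: "x \<ge> 0" "snd (U c x) < 0" "\<forall>y\<in>{0..x}. fst (U c y) < 1" by blast
  obtain M where M: "M < 1" "\<forall>y\<in>{0..x}. fst (U c y) \<le> M"
    using max_on[OF th_cont_on x(1) x(3)] by blast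
  define m where "m = min (1 - M) (- snd (U c x))"
  have m: "m > 0" unfolding m_def using M x by simp
  obtain d where d: "d > 0" "\<forall>c'\<in>{cmax..0}. dist c' c < d \<longrightarrow> dist (W c') (W c) < m / exp (Lam * x)"
    using W_close[OF c, of "m / exp (Lam * x)"] m by auto
  show ?thesis
  proof (rule exI[of _ d], intro conjI ballI impI)
    fix c' assume c': "c' \<in> {cmax..0}" "dist c' c < d"
    then have dW: "dist (W c') (W c) < m / exp (Lam * x)" using d by blast
    have cl: "\<bar>fst (U c' z) - fst (U c z)\<bar> < m \<and> \<bar>snd (U c' z) - snd (U c z)\<bar> < m" if "0 \<le> z" "z \<le> x" for z
      using U_close[OF dW that] abs_fst_le[of "U c' z - U c z"] abs_snd_le[of "U c' z - U c z"] by auto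
    show "inA c'"
    proof (intro exI[of _ x] conjI ballI)
      show "0 \<le> x" by fact
      have "snd (U c' x) < snd (U c x) + m" using cl[of x] x by auto
      then show "snd (U c' x) < 0" unfolding m_def by linarith
      fix y assume y: "y \<in> {0..x}"
      have "fst (U c' y) < fst (U c y) + m" using cl[of y] y by auto
      then show "fst (U c' y) < 1" using M(2) y unfolding m_def by fastforce
    qed
  qed (use d in simp)
qed

lemma B_open:
  assumes c: "c \<in> {cmax..0}" and B: "inB c"
  shows "\<exists>d>0. \<forall>c'\<in>{cmax..0}. dist c' c < d \<longrightarrow> inB c'"
proof -
  from B obtain x where x: "x \<ge> 0" "fst (U c x) > 1" "\<forall>y\<in>{0..x}. snd (U c y) > 0" by blast
  obtain m0 where m0: "m0 > 0" "\<forall>y\<in>{0..x}. snd (U c y) \<ge> m0"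
    using min_on[OF pp_cont_on x(1) x(3)] by blast
  define m where "m = min m0 (fst (U c x) - 1)"
  have m: "m > 0" unfolding m_def using m0 x by simp
  obtain d where d: "d > 0" "\<forall>c'\<in>{cmax..0}. dist c' c < d \<longrightarrow> dist (W c') (W c) < m / exp (Lam * x)"
    using W_close[OF c, of "m / exp (Lam * x)"] m by auto
  show ?thesis
  proof (rule exI[of _ d], intro conjI ballI impI)
    fix c' assume c': "c' \<in> {cmax..0}" "dist c' c < d"
    then have dW: "dist (W c') (W c) < m / exp (Lam * x)" using d by blast
    have cl: "\<bar>fst (U c' z) - fst (U c z)\<bar> < m \<and> \<bar>snd (U c' z) - snd (U c z)\<bar> < m" if "0 \<le> z" "z \<le> x" for z
      using U_close[OF dW that] abs_fst_le[of "U c' z - U c z"] abs_snd_le[of "U c' z - U c z"] by auto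
    show "inB c'"
    proof (intro exI[of _ x] conjI ballI)
      show "0 \<le> x" by fact
      have "fst (U c' x) > fst (U c x) - m" using cl[of x] x by auto
      then show "fst (U c' x) > 1" unfolding m_def by linarith
      fix y assume y: "y \<in> {0..x}"
      have "snd (U c' y) > snd (U c y) - m" using cl[of y] y by auto
      then show "snd (U c' y) > 0" using m0(2) y unfolding m_def by fastforce
    qed
  qed (use d in simp)
qed

lemma kq_lt1: "kq < 1"
  using Qg_pos Qp_gt by (simp add: divide_less_eq)

lemma A0: "inA 0"
proof -
  have c0: "(0::real) \<in> {cmax..0}" using cmax_neg by simp
  have U00: "U 0 0 = (0, 0)" using U_0[OF c0] ths_0 by simp
  have "Psi 0 > 0" using Psi_pos by simp
  then have der: "((\<lambda>x. snd (U 0 x)) has_real_derivative - Psi 0) (at 0 within {0..})"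
    using pp_deriv[OF c0, of 0] U00 by (simp add: clamp01_def)
  obtain d where d: "d > 0" "\<forall>h>0. 0 + h \<in> {0..} \<longrightarrow> h < d \<longrightarrow> snd (U 0 (0 + h)) < snd (U 0 0)"
    using has_real_derivative_neg_dec_right[OF der] \<open>Psi 0 > 0\<close> by force
  obtain d' where d': "d' > 0" "\<forall>y. dist y 0 < d' \<longrightarrow> fst (U 0 y) < 1"
    using cont_lt[OF th_cont, of 0 0 1] U00 by auto
  define x where "x = min d d' / 2"
  show ?thesis
  proof (intro exI[of _ x] conjI ballI)
    show "0 \<le> x" unfolding x_def using d d' by simp
    show "snd (U 0 x) < 0" using d(2)[rule_format, of x] U00 d d' unfolding x_def by simp
    fix y assume "y \<in> {0..x}"
    then have "dist y 0 < d'" unfolding x_def using d d' by (auto simp: dist_real_def)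
    then show "fst (U 0 y) < 1" using d' by blast
  qed
qed

lemma Bcmax: "inB cmax"
proof -
  have c0: "cmax \<in> {cmax..0}" using cmax_neg by simp
  have h1: "eta * cmax < 0" using eta_pos cmax_neg by (simp add: mult_pos_neg)
  have "eta * cmax * (1 - kq) < 0" by (rule mult_neg_pos[OF h1]) (use kq_lt1 in simp)
  then have p0: "- eta * cmax * (1 - kq) > 0" by simp
  have U00: "U cmax 0 = (1, - eta * cmax * (1 - kq))" using U_0[OF c0] ths_cmax by simp
  have der: "((\<lambda>x. fst (U cmax x)) has_real_derivative - eta * cmax * (1 - kq)) (at 0 within {0..})"
    using th_deriv[OF c0, of 0] U00 by simp
  obtain d where d: "d > 0" "\<forall>h>0. 0 + h \<in> {0..} \<longrightarrow> h < d \<longrightarrow> fst (U cmax 0) < fst (U cmax (0 + h))"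
    using has_real_derivative_pos_inc_right[OF der p0] by force
  obtain d' where d': "d' > 0" "\<forall>y. dist y 0 < d' \<longrightarrow> snd (U cmax y) > 0"
    using cont_gt[OF pp_cont[where c=cmax and x=0], of 0] U00 p0 by auto
  define x where "x = min d d' / 2"
  show ?thesis
  proof (intro exI[of _ x] conjI ballI)
    show "0 \<le> x" unfolding x_def using d d' by simp
    show "fst (U cmax x) > 1" using d(2)[rule_format, of x] U00 d d' unfolding x_def by simp
    fix y assume "y \<in> {0..x}"
    then have "dist y 0 < d'" unfolding x_def using d d' by (auto simp: dist_real_def)
    then show "snd (U cmax y) > 0" using d' by blast
  qed
qed

lemma exists_c: "\<exists>c\<in>{cmax<..<0}. \<not> inA c \<and> \<not> inB c"
proof (rule ccontr)
  assume nc: "\<not> ?thesis"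
  let ?S = "{cmax..0}"
  define OA where "OA = \<Union>{ball c d | c d. c \<in> ?S \<and> inA c \<and> d > 0 \<and> (\<forall>c'\<in>?S. dist c' c < d \<longrightarrow> inA c')}"
  define OB where "OB = \<Union>{ball c d | c d. c \<in> ?S \<and> inB c \<and> d > 0 \<and> (\<forall>c'\<in>?S. dist c' c < d \<longrightarrow> inB c')}"
  have oA: "open OA" unfolding OA_def by (intro open_Union) auto
  have oB: "open OB" unfolding OB_def by (intro open_Union) auto
  have A1: "inA y" if "y \<in> OA" "y \<in> ?S" for y
    using that unfolding OA_def by (auto simp: dist_commute)
  have B1: "inB y" if "y \<in> OB" "y \<in> ?S" for y
    using that unfolding OB_def by (auto simp: dist_commute)
  have A2: "y \<in> OA" if yS: "y \<in> ?S" and yA: "inA y" for y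
  proof -
    obtain d where dd: "d > 0" "\<forall>c'\<in>?S. dist c' y < d \<longrightarrow> inA c'" using A_open[OF yS yA] by blast
    have "ball y d \<in> {ball c d | c d. c \<in> ?S \<and> inA c \<and> d > 0 \<and> (\<forall>c'\<in>?S. dist c' c < d \<longrightarrow> inA c')}"
      using yS yA dd by blast
    moreover have "y \<in> ball y d" using dd by simp
    ultimately show ?thesis unfolding OA_def by blast
  qed
  have B2: "y \<in> OB" if yS: "y \<in> ?S" and yA: "inB y" for y
  proof -
    obtain d where dd: "d > 0" "\<forall>c'\<in>?S. dist c' y < d \<longrightarrow> inB c'" using B_open[OF yS yA] by blast
    have "ball y d \<in> {ball c d | c d. c \<in> ?S \<and> inB c \<and> d > 0 \<and> (\<forall>c'\<in>?S. dist c' c < d \<longrightarrow> inB c')}"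
      using yS yA dd by blast
    moreover have "y \<in> ball y d" using dd by simp
    ultimately show ?thesis unfolding OB_def by blast
  qed
  have all: "inA y \<or> inB y" if "y \<in> ?S" for y
  proof (cases "y = cmax \<or> y = 0")
    case True then show ?thesis using A0 Bcmax by auto
  next
    case False then show ?thesis using nc that by auto
  qed
  have "OA \<inter> ?S = {} \<or> OB \<inter> ?S = {}"
  proof (rule connectedD[OF connected_Icc oA oB])
    show "OA \<inter> OB \<inter> ?S = {}" using A1 B1 AB_disj by blast
    show "?S \<subseteq> OA \<union> OB" using all A2 B2 by blast
  qed
  moreover have "0 \<in> OA \<inter> ?S" using A2 A0 cmax_neg by auto
  moreover have "cmax \<in> OB \<inter> ?S" using B2 Bcmax cmax_neg by auto
  ultimately show False by blast
qed

end


lemma ineqE: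
  fixes Lp a P q p :: real
  assumes Lp: "Lp \<ge> 0" and a: "a \<ge> 0" and P: "\<bar>P\<bar> \<le> Lp * \<bar>q\<bar>"
  shows "0 \<le> (1 + Lp) * (q * q + p * p) - 2 * q * p + 2 * a * (p * p) - 2 * p * P"
proof -
  have 1: "2 * q * p \<le> q * q + p * p"
  proof -
    have "0 \<le> (q - p) * (q - p)" by simp
    then show ?thesis by (simp add: algebra_simps)
  qed
  have 2: "p * P \<le> \<bar>p\<bar> * \<bar>P\<bar>" by (metis abs_ge_self abs_mult)
  have 3: "\<bar>p\<bar> * \<bar>P\<bar> \<le> \<bar>p\<bar> * (Lp * \<bar>q\<bar>)" using P by (simp add: mult_left_mono)
  have 4: "2 * (\<bar>p\<bar> * (Lp * \<bar>q\<bar>)) \<le> Lp * (q * q + p * p)"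
  proof -
    have "0 \<le> Lp * ((\<bar>q\<bar> - \<bar>p\<bar>) * (\<bar>q\<bar> - \<bar>p\<bar>))" using Lp by simp
    moreover have "\<bar>q\<bar> * \<bar>q\<bar> = q * q" "\<bar>p\<bar> * \<bar>p\<bar> = p * p"
      by (simp_all add: abs_mult[symmetric])
    ultimately show ?thesis by (simp add: algebra_simps)
  qed
  have 5: "0 \<le> 2 * a * (p * p)" using a by simp
  show ?thesis using 1 2 3 4 5 by (simp add: algebra_simps)
qed

context prob
begin

lemma psi_clamp_bound: "\<bar>Psi (clamp01 t)\<bar> \<le> Lp * \<bar>1 - t\<bar>"
proof -
  have "\<bar>Psi (clamp01 t) - Psi (clamp01 1)\<bar> \<le> Lp * \<bar>clamp01 t - clamp01 1\<bar>"
    by (rule lipP) (rule clamp01_in)+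
  also have "\<dots> \<le> Lp * \<bar>t - 1\<bar>" using Lp clamp01_lip by (rule mult_left_mono[rotated])
  finally show ?thesis using Psi_1 by (simp add: clamp01_def abs_minus_commute)
qed

lemma E_pos:
  assumes c: "c \<in> {cmax..0}" and t0: "theta_s c < 1" and x: "x \<ge> 0"
  shows "(1 - fst (U c x)) * (1 - fst (U c x)) + snd (U c x) * snd (U c x) > 0"
proof -
  let ?t = "\<lambda>z. fst (U c z)" and ?p = "\<lambda>z. snd (U c z)"
  let ?a = "- eta * c"
  have a: "?a \<ge> 0" using c eta_pos by (simp add: mult_nonneg_nonpos)
  define E where "E z = (1 - ?t z) * (1 - ?t z) + ?p z * ?p z" for z
  define g where "g z = exp ((1 + Lp) * z) * E z" for z
  define g' where "g' z = exp ((1 + Lp) * z) * ((1 + Lp) * E z + (- 2 * (1 - ?t z) * ?p z + 2 * ?p z * (?a * ?p z - Psi (clamp01 (?t z)))))" for z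
  have der: "(g has_real_derivative g' z) (at z within {0..})" if z: "z \<in> {0..}" for z
  proof -
    have dt: "(?t has_real_derivative ?p z) (at z within {0..})" using th_deriv[OF c] z by simp
    have dp: "(?p has_real_derivative ?a * ?p z - Psi (clamp01 (?t z))) (at z within {0..})"
      using pp_deriv[OF c] z by simp
    show ?thesis unfolding g_def g'_def E_def
      by (rule derivative_eq_intros dt dp refl | simp)+ (simp add: algebra_simps)
  qed
  have g'nn: "g' z \<ge> 0" for z
  proof -
    have "0 \<le> (1 + Lp) * ((1 - ?t z) * (1 - ?t z) + ?p z * ?p z) - 2 * (1 - ?t z) * ?p z + 2 * ?a * (?p z * ?p z) - 2 * ?p z * Psi (clamp01 (?t z))"
      by (rule ineqE[OF Lp a psi_clamp_bound])
    then have "0 \<le> (1 + Lp) * E z + (- 2 * (1 - ?t z) * ?p z + 2 * ?p z * (?a * ?p z - Psi (clamp01 (?t z))))"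
      unfolding E_def by (simp add: algebra_simps)
    then show ?thesis unfolding g'_def by simp
  qed
  have "g 0 \<le> g x"
    by (rule mono_on_interval[where S="{0..}" and f=g and f'=g', OF der]) (use x g'nn in auto)
  moreover have "g 0 > 0"
  proof -
    have "U c 0 = u0 c" by (rule U_0[OF c])
    then have "E 0 \<ge> (1 - theta_s c) * (1 - theta_s c)" unfolding E_def by simp
    moreover have "(1 - theta_s c) * (1 - theta_s c) > 0" using t0 by simp
    ultimately show ?thesis unfolding g_def by simp
  qed
  ultimately have "g x > 0" by simp
  then have "E x > 0" unfolding g_def by (simp add: zero_less_mult_iff)
  then show ?thesis unfolding E_def .
qed

lemma good:
  assumes c: "c \<in> {cmax<..<0}" and nA: "\<not> inA c" and nB: "\<not> inB c" and x: "x \<ge> 0"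
  shows "snd (U c x) > 0 \<and> fst (U c x) < 1"
proof (rule ccontr)
  assume nx: "\<not> ?thesis"
  let ?t = "\<lambda>z. fst (U c z)" and ?p = "\<lambda>z. snd (U c z)"
  let ?a = "- eta * c"
  have c1: "c \<in> {cmax..0}" using c by auto
  have t0: "theta_s c < 1"
    using ths_decr c ths_cmax cmax_neg unfolding monotone_on_def by force
  have U0: "U c 0 = u0 c" by (rule U_0[OF c1])
  have th0: "?t 0 < 1" using U0 t0 by simp
  define S where "S = ({0..} \<inter> ?p -` {..0}) \<union> ({0..} \<inter> ?t -` {1..})"
  have clS: "closed S" unfolding S_def
    by (intro closed_Un continuous_closed_preimage pp_cont_on th_cont_on) auto
  have xS: "x \<in> S" using nx x unfolding S_def by auto
  have neS: "S \<noteq> {}" using xS by auto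
  have bdd: "bdd_below S" unfolding S_def by (auto intro: bdd_belowI[of _ 0])
  define s where "s = Inf S"
  have sS: "s \<in> S" unfolding s_def by (rule closed_contains_Inf[OF neS bdd clS])
  have s0: "s \<ge> 0" using sS unfolding S_def by auto
  have before: "?p y > 0 \<and> ?t y < 1" if "0 \<le> y" "y < s" for y
  proof (rule ccontr)
    assume "\<not> (?p y > 0 \<and> ?t y < 1)"
    then have "y \<in> S" using that unfolding S_def by auto
    then have "s \<le> y" unfolding s_def by (rule cInf_lower[OF _ bdd])
    then show False using that by simp
  qed
  have Es: "(1 - ?t s) * (1 - ?t s) + ?p s * ?p s > 0" by (rule E_pos[OF c1 t0 s0])
  have pge: "?p s \<ge> 0" if "s > 0"
    by (rule left_lim_ge[OF pp_cont that]) (use before in auto)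
  have tle: "?t s \<le> 1"
  proof (cases "s > 0")
    case True then show ?thesis by (intro left_lim_le[OF th_cont True]) (use before in auto)
  next
    case False then have "s = 0" using s0 by simp
    then show ?thesis using th0 by simp
  qed
  consider "?p s < 0" | "?p s = 0" | "?p s > 0" by linarith
  then show False
  proof cases
    case 1
    then have "s = 0" using pge s0 by force
    then have "inA c" using 1 th0 by (intro exI[of _ 0]) auto
    then show False using nA by blast
  next
    case 2
    then have ts: "?t s < 1" using Es tle by (cases "?t s = 1") auto
    have "clamp01 (?t s) \<in> {0..<1}" using ts unfolding clamp01_def by auto
    then have "Psi (clamp01 (?t s)) > 0" using Psi_pos by blast
    then have dneg: "?a * ?p s - Psi (clamp01 (?t s)) < 0" using 2 by simp
    obtain d where d: "d > 0" "\<forall>h>0. s + h \<in> {0..} \<longrightarrow> h < d \<longrightarrow> ?p s > ?p (s + h)"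
      using has_real_derivative_neg_dec_right[OF pp_deriv[OF c1 s0] dneg] by blast
    obtain d' where d': "d' > 0" "\<forall>y. dist y s < d' \<longrightarrow> ?t y < 1"
      using cont_lt[OF th_cont ts] by blast
    define x1 where "x1 = s + min d d' / 2"
    have "inA c"
    proof (intro exI[of _ x1] conjI ballI)
      show "0 \<le> x1" unfolding x1_def using s0 d d' by simp
      show "?p x1 < 0" using d(2)[rule_format, of "min d d' / 2"] d d' s0 2 unfolding x1_def by simp
      fix y assume y: "y \<in> {0..x1}"
      show "?t y < 1"
      proof (cases "y < s")
        case True then show ?thesis using before y by auto
      next
        case False
        then have "dist y s < d'" using y d d' unfolding x1_def by (auto simp: dist_real_def)
        then show ?thesis using d' by blast
      qed
    qed
    then show False using nA by blast
  next
    case 3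
    then have "?t s \<ge> 1" using sS unfolding S_def by auto
    then have ts: "?t s = 1" using tle by simp
    then have "s \<noteq> 0" using th0 by auto
    have dpos: "?p s > 0" by fact
    obtain d where d: "d > 0" "\<forall>h>0. s + h \<in> {0..} \<longrightarrow> h < d \<longrightarrow> ?t s < ?t (s + h)"
      using has_real_derivative_pos_inc_right[OF th_deriv[OF c1 s0] dpos] by blast
    obtain d' where d': "d' > 0" "\<forall>y. dist y s < d' \<longrightarrow> ?p y > 0"
      using cont_gt[OF pp_cont dpos] by blast
    define x1 where "x1 = s + min d d' / 2"
    have "inB c"
    proof (intro exI[of _ x1] conjI ballI)
      show "0 \<le> x1" unfolding x1_def using s0 d d' by simp
      show "?t x1 > 1" using d(2)[rule_format, of "min d d' / 2"] d d' s0 ts unfolding x1_def by simp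
      fix y assume y: "y \<in> {0..x1}"
      show "?p y > 0"
      proof (cases "y < s")
        case True then show ?thesis using before y by auto
      next
        case False
        then have "dist y s < d'" using y d d' unfolding x1_def by (auto simp: dist_real_def)
        then show ?thesis using d' by blast
      qed
    qed
    then show False using nB by blast
  qed
qed

end


context prob
begin

lemma Psi_cont: "continuous_on {0..1} Psi"
proof (rule lipschitz_on_continuous_on)
  show "Lp-lipschitz_on {0..1} Psi"
    by (rule lipschitz_onI) (use lipP Lp in \<open>auto simp: dist_real_def\<close>)
qed

lemma PsiC_cont: "continuous_on UNIV (\<lambda>t. Psi (clamp01 t))"
proof (rule continuous_on_compose2[OF Psi_cont])
  show "continuous_on UNIV clamp01" unfolding clamp01_def[abs_def] by (intro continuous_intros)
  show "clamp01 ` UNIV \<subseteq> {0..1}" using clamp01_in by auto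
qed

lemma th_mono:
  assumes c: "c \<in> {cmax<..<0}" and nA: "\<not> inA c" and nB: "\<not> inB c"
    and xy: "0 \<le> x" "x \<le> y"
  shows "fst (U c x) \<le> fst (U c y)"
proof -
  have c1: "c \<in> {cmax..0}" using c by auto
  show ?thesis
    by (rule mono_on_interval[where S="{0..}" and f="\<lambda>z. fst (U c z)" and f'="\<lambda>z. snd (U c z)"])
       (use th_deriv[OF c1] good[OF c nA nB] xy in \<open>auto simp: less_imp_le\<close>)
qed

lemma th_lim:
  assumes c: "c \<in> {cmax<..<0}" and nA: "\<not> inA c" and nB: "\<not> inB c"
  shows "((\<lambda>x. fst (U c x)) \<longlongrightarrow> 1) at_top"
proof -
  let ?t = "\<lambda>z. fst (U c z)" and ?p = "\<lambda>z. snd (U c z)"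
  define a where "a = - eta * c"
  have c1: "c \<in> {cmax..0}" using c by auto
  have a: "a > 0" using c eta_pos unfolding a_def by (simp add: mult_pos_neg)
  have gd: "?p x > 0" "?t x < 1" if "x \<ge> 0" for x using good[OF c nA nB that] by auto
  have t0: "?t 0 = theta_s c" using U_0[OF c1] by simp
  have ts0: "theta_s c > 0"
    using ths_decr c ths_0 cmax_neg unfolding monotone_on_def by force
  have tge: "?t x \<ge> theta_s c" if "x \<ge> 0" for x using th_mono[OF c nA nB, of 0 x] that t0 by simp
  have ev: "eventually (\<lambda>x. ?t x > 1 - e) at_top" if e: "e > 0" for e
  proof (rule ccontr)
    assume ne: "\<not> ?thesis"
    have le: "?t x \<le> 1 - e" if x: "x \<ge> 0" for x
    proof -
      from ne have "\<forall>N. \<exists>n\<ge>N. \<not> ?t n > 1 - e" unfolding eventually_at_top_linorder by blast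
      then obtain n where "n \<ge> x" "?t n \<le> 1 - e" by force
      then show ?thesis using th_mono[OF c nA nB x, of n] by simp
    qed
    have e1: "0 \<le> 1 - e" using le[of 0] t0 ts0 by simp
    have neI: "{0..1-e} \<noteq> {}" using e1 by simp
    have cI: "continuous_on {0..1-e} Psi" by (rule continuous_on_subset[OF Psi_cont]) (use e in auto)
    obtain z where z: "z \<in> {0..1-e}" "\<forall>y\<in>{0..1-e}. Psi z \<le> Psi y"
      using continuous_attains_inf[OF compact_Icc neI cI] by blast
    define m where "m = Psi z"
    have m: "m > 0" unfolding m_def using Psi_pos z e by auto
    have Pm: "Psi (clamp01 (?t x)) \<ge> m" if x: "x \<ge> 0" for x
    proof -
      have "?t x \<in> {0..1-e}" using le[OF x] tge[OF x] ts0 by auto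
      moreover then have "clamp01 (?t x) = ?t x" using e by (intro clamp01_id) auto
      ultimately show ?thesis using z unfolding m_def by simp
    qed
    show False
    proof (cases "\<forall>x\<ge>0. ?p x \<ge> m / (2 * a)")
      case True
      define \<delta> where "\<delta> = m / (2 * a)"
      have dpos: "\<delta> > 0" unfolding \<delta>_def by (intro divide_pos_pos) (use m a in \<open>auto simp: mult.commute\<close>)
      have Td: "\<forall>x\<ge>0. ?p x \<ge> \<delta>" using True unfolding \<delta>_def by simp
      have d2: "2 / \<delta> \<ge> 0" using dpos by simp
      have "?t (2 / \<delta>) \<ge> ?t 0 + \<delta> * (2 / \<delta> - 0)"
        by (rule barrier[where f'="?p"]) (use th_deriv[OF c1] Td dpos d2 in auto)
      then have "?t (2 / \<delta>) \<ge> 2" using dpos t0 ts0 by simp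
      then show False using gd(2)[of "2 / \<delta>"] dpos by simp
    next
      case False
      then obtain x0 where x0: "x0 \<ge> 0" "?p x0 < m / (2 * a)" by (auto simp: not_le)
      define X where "X = x0 + 4 * ?p x0 / m + 1"
      have X: "X \<ge> x0" unfolding X_def using gd(1)[OF x0(1)] m by simp
      have "- ?p X \<ge> - ?p x0 + m / 2 * (X - x0)"
      proof (rule barrier[where f="\<lambda>z. - ?p z" and f'="\<lambda>z. - (a * ?p z - Psi (clamp01 (?t z)))"])
        fix z assume z: "z \<ge> x0"
        have dz: "(?p has_real_derivative (a * ?p z - Psi (clamp01 (?t z)))) (at z within {0..})"
          unfolding a_def by (rule pp_deriv[OF c1]) (use z x0 in simp)
        have "((\<lambda>z. - ?p z) has_real_derivative - (a * ?p z - Psi (clamp01 (?t z)))) (at z within {0..})"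
          by (rule DERIV_minus[OF dz])
        then show "((\<lambda>z. - ?p z) has_real_derivative - (a * ?p z - Psi (clamp01 (?t z)))) (at z within {x0..})"
          by (rule DERIV_subset) (use x0 in auto)
      next
        fix z assume z: "z \<ge> x0" and pz: "- ?p z \<ge> - ?p x0"
        have "a * ?p z \<le> a * ?p x0" by (rule mult_left_mono) (use pz a in auto)
        also have "\<dots> < a * (m / (2 * a))" by (rule mult_strict_left_mono) (use x0(2) a in auto)
        also have "\<dots> = m / 2" using a by simp
        finally have "a * ?p z < m / 2" .
        moreover have "Psi (clamp01 (?t z)) \<ge> m" using Pm z x0 by simp
        ultimately show "m / 2 \<le> - (a * ?p z - Psi (clamp01 (?t z)))" by simp
      qed (use m X in auto)
      also have "m / 2 * (X - x0) = 2 * ?p x0 + m / 2" unfolding X_def using m by (simp add: field_simps)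
      finally have "?p X < 0" using gd(1)[OF x0(1)] m by simp
      then show False using gd(1)[of X] X x0 by simp
    qed
  qed
  show ?thesis
  proof (rule order_tendstoI)
    fix y :: real assume "y < 1"
    then show "eventually (\<lambda>x. ?t x > y) at_top" using ev[of "1 - y"] by simp
  next
    fix y :: real assume y: "y > 1"
    have "eventually (\<lambda>x. x \<ge> (0::real)) at_top" by simp
    then show "eventually (\<lambda>x. ?t x < y) at_top"
      by eventually_elim (use gd y in force)
  qed
qed

lemma pp_lim:
  assumes c: "c \<in> {cmax<..<0}" and nA: "\<not> inA c" and nB: "\<not> inB c"
  shows "((\<lambda>x. snd (U c x)) \<longlongrightarrow> 0) at_top"
proof -
  let ?t = "\<lambda>z. fst (U c z)" and ?p = "\<lambda>z. snd (U c z)"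
  define a where "a = - eta * c"
  have c1: "c \<in> {cmax..0}" using c by auto
  have a: "a > 0" using c eta_pos unfolding a_def by (simp add: mult_pos_neg)
  have gd: "?p x > 0" "?t x < 1" if "x \<ge> 0" for x using good[OF c nA nB that] by auto
  have t0: "?t 0 = theta_s c" using U_0[OF c1] by simp
  have ts0: "theta_s c > 0"
    using ths_decr c ths_0 cmax_neg unfolding monotone_on_def by force
  have tge: "?t x \<ge> theta_s c" if "x \<ge> 0" for x using th_mono[OF c nA nB, of 0 x] that t0 by simp
  have Plim: "((\<lambda>x. Psi (clamp01 (?t x))) \<longlongrightarrow> Psi (clamp01 1)) at_top"
    by (rule isCont_tendsto_compose[OF _ th_lim[OF c nA nB]])
       (use PsiC_cont in \<open>simp add: continuous_on_eq_continuous_at\<close>)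
  then have Plim0: "((\<lambda>x. Psi (clamp01 (?t x))) \<longlongrightarrow> 0) at_top"
    using Psi_1 by (simp add: clamp01_def)
  show ?thesis
  proof (rule order_tendstoI)
    fix y :: real assume y: "y < 0"
    have "eventually (\<lambda>x. x \<ge> (0::real)) at_top" by simp
    then show "eventually (\<lambda>x. ?p x > y) at_top"
      by eventually_elim (use gd y in force)
  next
    fix e :: real assume e: "e > 0"
    have "eventually (\<lambda>x. Psi (clamp01 (?t x)) < a * e / 2) at_top"
      by (rule order_tendstoD(2)[OF Plim0]) (use a e in \<open>simp add: mult_neg_pos\<close>)
    then obtain N where N: "\<And>x. x \<ge> N \<Longrightarrow> Psi (clamp01 (?t x)) < a * e / 2"
      unfolding eventually_at_top_linorder by blast
    show "eventually (\<lambda>x. ?p x < e) at_top"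
    proof (rule ccontr)
      assume ne: "\<not> ?thesis"
      from ne have "\<forall>M. \<exists>n\<ge>M. \<not> ?p n < e" unfolding eventually_at_top_linorder by blast
      then obtain x0 where x0': "x0 \<ge> max N 0" "\<not> ?p x0 < e" by blast
      then have x0: "x0 \<ge> max N 0" "?p x0 \<ge> e" by auto
      have x00: "x0 \<ge> 0" using x0 by simp
      have der_p: "(?p has_real_derivative a * ?p z - Psi (clamp01 (?t z))) (at z within {x0..})" if "z \<ge> x0" for z
        unfolding a_def by (rule DERIV_subset[OF pp_deriv[OF c1]]) (use that x00 in auto)
      have der_t: "(?t has_real_derivative ?p z) (at z within {x0..})" if "z \<ge> x0" for z
        by (rule DERIV_subset[OF th_deriv[OF c1]]) (use that x00 in auto)
      have ae: "0 < a * e / 2" by (intro divide_pos_pos mult_pos_pos) (use a e in auto)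
      have pe: "?p z \<ge> e" if z: "z \<ge> x0" for z
      proof -
        have "?p z \<ge> e + a * e / 2 * (z - x0)"
        proof (rule barrier[OF der_p x0(2) _ _ z])
          fix w assume w: "w \<ge> x0" "?p w \<ge> e"
          have "a * ?p w \<ge> a * e" by (rule mult_left_mono) (use w a in auto)
          moreover have "Psi (clamp01 (?t w)) < a * e / 2" using N w x0 by simp
          ultimately show "a * e / 2 \<le> a * ?p w - Psi (clamp01 (?t w))" by simp
        qed (use ae in auto)
        moreover have "a * e / 2 * (z - x0) \<ge> 0" using a e z by simp
        ultimately show ?thesis by simp
      qed
      have "?t (x0 + 2 / e) \<ge> ?t x0 + e * (x0 + 2 / e - x0)"
        by (rule barrier[OF der_t _ _ e]) (use pe e in auto)
      then have "?t (x0 + 2 / e) \<ge> ?t x0 + 2" using e by simp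
      moreover have "?t x0 \<ge> 0" using tge[OF x00] ts0 by simp
      moreover have "?t (x0 + 2 / e) < 1" using gd(2)[of "x0 + 2 / e"] x00 e by simp
      ultimately show False by simp
    qed
  qed
qed

end


context prob
begin

lemma exp_lim_bot:
  fixes c :: real
  assumes "c < 0"
  shows "((\<lambda>x. exp (- c * x)) \<longlongrightarrow> 0) at_bot"
proof -
  have "LIM x at_bot. (- c) * x :> at_bot"
    by (rule filterlim_tendsto_pos_mult_at_bot[OF tendsto_const _ filterlim_ident]) (use assms in simp)
  then show ?thesis using filterlim_compose[OF exp_at_bot] by blast
qed

lemma existence: "\<exists>c\<in>{cmax..0}. \<exists>theta. solves_Pc eta Qg Qp Psi theta_s c theta"
proof -
  obtain c where c: "c \<in> {cmax<..<0}" and nA: "\<not> inA c" and nB: "\<not> inB c"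
    using exists_c by blast
  have c1: "c \<in> {cmax..0}" using c by auto
  have cneg: "c < 0" using c by simp
  define ths where "ths = theta_s c"
  have ts: "ths > 0" "ths < 1"
    using ths_decr c ths_0 ths_cmax cmax_neg unfolding monotone_on_def ths_def by force+
  let ?t = "\<lambda>z. fst (U c z)" and ?p = "\<lambda>z. snd (U c z)"
  have U0: "U c 0 = u0 c" by (rule U_0[OF c1])
  have t0: "?t 0 = ths" using U0 ths_def by simp
  have p0: "?p 0 = - eta * c * (ths - kq)" using U0 ths_def by simp
  have gd: "?p x > 0" "?t x < 1" if "x \<ge> 0" for x using good[OF c nA nB that] by auto
  have tge: "?t x \<ge> ths" if "x \<ge> 0" for x using th_mono[OF c nA nB, of 0 x] that t0 by simp
  define theta where "theta x = (if x < 0 then ths * exp (- c * x) else ?t x)" for x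
  define d1 where "d1 x = - c * ths * exp (- c * x)" for x
  define dd1 where "dd1 x = c * c * ths * exp (- c * x)" for x
  define d2 where "d2 x = ?p x" for x
  define dd2 where "dd2 x = - eta * c * ?p x - Psi (clamp01 (?t x))" for x
  have eqL: "theta x = ths * exp (- c * x)" if "x \<le> 0" for x
    using that t0 unfolding theta_def by auto
  have eqR: "theta x = ?t x" if "x \<ge> 0" for x
    using that unfolding theta_def by auto
  have rng: "\<forall>x. 0 \<le> theta x \<and> theta x \<le> 1"
  proof
    fix x show "0 \<le> theta x \<and> theta x \<le> 1"
    proof (cases "x < 0")
      case True
      have cx: "c * x > 0" using True cneg by (simp add: mult_neg_neg)
      have e1: "exp (- c * x) \<le> 1" using cx by simp
      have m1: "ths * exp (- c * x) \<le> ths * 1" by (rule mult_left_mono[OF e1]) (use ts in simp)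
      have m: "ths * exp (- c * x) \<le> 1" using m1 ts by linarith
      have m0: "0 \<le> ths * exp (- c * x)" using ts by simp
      show ?thesis using eqL[of x] True m m0 ts by simp
    next
      case False
      then show ?thesis using eqR[of x] gd[of x] tge[of x] ts by simp
    qed
  qed
  have cL: "continuous_on {..0} theta"
    by (rule continuous_on_eq[of _ "\<lambda>x. ths * exp (- c * x)"]) (auto intro!: continuous_intros simp: eqL)
  have cR: "continuous_on {0..} theta"
    by (rule continuous_on_eq[OF th_cont_on]) (auto simp: eqR)
  have cont: "continuous_on UNIV theta"
  proof -
    have "continuous_on ({..0} \<union> {0..}) theta"
      by (rule continuous_on_closed_Un[OF _ _ cL cR]) auto
    moreover have "{..0} \<union> {0..} = (UNIV :: real set)" by auto
    ultimately show ?thesis by simp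
  qed
  have der1: "\<forall>x\<le>0. (theta has_real_derivative d1 x) (at x within {..0})"
  proof (intro allI impI)
    fix x :: real assume x: "x \<le> 0"
    have "((\<lambda>x. ths * exp (- c * x)) has_real_derivative d1 x) (at x within {..0})"
      unfolding d1_def by (auto intro!: derivative_eq_intros simp: algebra_simps)
    then show "(theta has_real_derivative d1 x) (at x within {..0})"
      by (rule has_field_derivative_transform_within[where d=1]) (use x eqL in auto)
  qed
  have der2: "\<forall>x\<le>0. (d1 has_real_derivative dd1 x) (at x within {..0})"
    unfolding d1_def[abs_def] dd1_def by (auto intro!: derivative_eq_intros simp: algebra_simps)
  have cdd1: "continuous_on {..0} dd1"
    unfolding dd1_def[abs_def] by (intro continuous_intros)
  have der3: "\<forall>x\<ge>0. (theta has_real_derivative d2 x) (at x within {0..})"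
  proof (intro allI impI)
    fix x :: real assume x: "x \<ge> 0"
    show "(theta has_real_derivative d2 x) (at x within {0..})"
      unfolding d2_def
      by (rule has_field_derivative_transform_within[OF th_deriv[OF c1 x], where d=1]) (use x eqR in auto)
  qed
  have der4: "\<forall>x\<ge>0. (d2 has_real_derivative dd2 x) (at x within {0..})"
  proof (intro allI impI)
    fix x :: real assume x: "x \<ge> 0"
    have "(d2 has_real_derivative (- eta * c) * ?p x - Psi (clamp01 (?t x))) (at x within {0..})"
      unfolding d2_def[abs_def] by (rule pp_deriv[OF c1 x])
    then show "(d2 has_real_derivative dd2 x) (at x within {0..})" unfolding dd2_def by simp
  qed
  have cdd2: "continuous_on {0..} dd2"
  proof -
    have "continuous_on {0..} (\<lambda>x. Psi (clamp01 (?t x)))"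
      by (rule continuous_on_compose2[OF PsiC_cont th_cont_on]) auto
    then show ?thesis unfolding dd2_def[abs_def] by (intro continuous_intros pp_cont_on)
  qed
  have eq1: "\<forall>x<0. dd1 x + c * d1 x = 0"
    unfolding dd1_def d1_def by (simp add: algebra_simps)
  have eq2: "\<forall>x>0. dd2 x + eta * c * d2 x = - Psi (theta x)"
  proof (intro allI impI)
    fix x :: real assume x: "x > 0"
    have "clamp01 (?t x) = ?t x" using gd[of x] tge[of x] ts x by (intro clamp01_id) auto
    then show "dd2 x + eta * c * d2 x = - Psi (theta x)"
      unfolding dd2_def d2_def using eqR[of x] x by simp
  qed
  have evbot: "eventually (\<lambda>x::real. x \<le> 0) at_bot" by (rule eventually_le_at_bot)
  have evtop: "eventually (\<lambda>x::real. x \<ge> 0) at_top" by simp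
  have lbot: "(theta \<longlongrightarrow> 0) at_bot"
  proof -
    have "((\<lambda>x. ths * exp (- c * x)) \<longlongrightarrow> ths * 0) at_bot"
      by (intro tendsto_intros exp_lim_bot cneg)
    moreover have "eventually (\<lambda>x. ths * exp (- c * x) = theta x) at_bot"
      using evbot by eventually_elim (simp add: eqL)
    ultimately show ?thesis using Lim_transform_eventually by fastforce
  qed
  have ltop: "(theta \<longlongrightarrow> 1) at_top"
  proof -
    have "eventually (\<lambda>x. ?t x = theta x) at_top"
      using evtop by eventually_elim (simp add: eqR)
    then show ?thesis using Lim_transform_eventually[OF th_lim[OF c nA nB]] by blast
  qed
  have ld1: "(d1 \<longlongrightarrow> 0) at_bot"
  proof -
    have "((\<lambda>x. - c * ths * exp (- c * x)) \<longlongrightarrow> - c * ths * 0) at_bot"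
      by (intro tendsto_intros exp_lim_bot cneg)
    then show ?thesis unfolding d1_def[abs_def] by simp
  qed
  have ld2: "(d2 \<longlongrightarrow> 0) at_top"
    unfolding d2_def[abs_def] by (rule pp_lim[OF c nA nB])
  have th0: "theta 0 = theta_s c" using eqR[of 0] t0 ths_def by simp
  have intf: "d2 0 - eta * d1 0 = Sfun eta Qg Qp c"
    unfolding d2_def d1_def Sfun_def using p0 by (simp add: algebra_simps)
  have "solves_Pc eta Qg Qp Psi theta_s c theta"
    unfolding solves_Pc_def
    by (intro conjI exI[of _ d1] exI[of _ dd1] exI[of _ d2] exI[of _ dd2] rng cont der1 der2 cdd1 der3 der4 cdd2
          eq1 eq2 lbot th0 ltop ld1 ld2 intf)
  then show ?thesis using c1 by blast
qed

end

lemma lip_from_smooth: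
  fixes Psi :: "real \<Rightarrow> real"
  assumes sm: "smooth_within Psi {0..1}"
  shows "\<exists>Lp\<ge>0. \<forall>s t. s \<in> {0..1} \<longrightarrow> t \<in> {0..1} \<longrightarrow> \<bar>Psi s - Psi t\<bar> \<le> Lp * \<bar>s - t\<bar>"
proof -
  obtain D :: "nat \<Rightarrow> real \<Rightarrow> real" where D0: "\<forall>x\<in>{0..1}. D 0 x = Psi x"
    and Dd: "\<forall>n. \<forall>x\<in>{0..1}. (D n has_real_derivative D (Suc n) x) (at x within {0..1})"
    using sm unfolding smooth_within_def by blast
  have d12: "\<forall>x\<in>{0..1}. (D 1 has_real_derivative D 2 x) (at x within {0..1})"
    using spec[OF Dd, of 1] by (simp add: numeral_2_eq_2)
  have cD1: "continuous_on {0..1} (D 1)"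
    by (rule DERIV_continuous_on[of _ _ "D 2"]) (use d12 in auto)
  have "compact (D 1 ` {0..1})" by (rule compact_continuous_image[OF cD1 compact_Icc])
  then obtain B where B: "\<forall>y\<in>D 1 ` {0..1}. \<bar>y\<bar> \<le> B"
    using compact_imp_bounded bounded_real by blast
  have B0: "B \<ge> 0" using B by force
  have dPsi: "(Psi has_real_derivative D 1 x) (at x within {0..1})" if x: "x \<in> {0..1}" for x
  proof -
    have "(D 0 has_real_derivative D 1 x) (at x within {0..1})" using Dd x by simp
    then show ?thesis by (rule has_field_derivative_transform_within[where d=1]) (use x D0 in auto)
  qed
  have "\<forall>s t. s \<in> {0..1} \<longrightarrow> t \<in> {0..1} \<longrightarrow> \<bar>Psi s - Psi t\<bar> \<le> B * \<bar>s - t\<bar>"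
  proof (intro allI impI)
    fix s t :: real assume st: "s \<in> {0..1}" "t \<in> {0..1}"
    have "norm (Psi s - Psi t) \<le> B * norm (s - t)"
      by (rule field_differentiable_bound[OF convex_real_interval(5) dPsi _ st]) (use B in auto)
    then show "\<bar>Psi s - Psi t\<bar> \<le> B * \<bar>s - t\<bar>" by simp
  qed
  then show ?thesis using B0 by blast
qed

theorem proposition6:
  fixes eta Qg Qp cmax :: real and Psi theta_s :: "real \<Rightarrow> real"
  assumes eta_pos: "eta > 0"
    and Qg_pos: "Qg > 0"
    and Qp_gt: "Qp > - Qg"
    and Psi_smooth: "smooth_within Psi {0..1}"
    and Psi_nonneg: "\<forall>t\<in>{0..1}. Psi t \<ge> 0"
    and Psi_pos: "\<forall>t\<in>{0..<1}. Psi t > 0"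
    and Psi_1: "Psi 1 = 0"
    and cmax_neg: "cmax < 0"
    and ths_range: "\<forall>c\<in>{cmax..0}. theta_s c \<in> {0..1}"
    and ths_cont: "continuous_on {cmax..0} theta_s"
    and ths_decr: "strict_antimono_on {cmax..0} theta_s"
    and ths_0: "theta_s 0 = 0"
    and ths_cmax: "theta_s cmax = 1"
    and ths_smooth: "smooth_within theta_s {cmax..<0}"
    and ths_deriv_neg: "\<forall>c\<in>{cmax..<0}. \<exists>d. (theta_s has_real_derivative d) (at c within {cmax..<0}) \<and> d < 0"
  shows "(\<exists>c\<in>{cmax..0}. \<exists>theta. solves_Pc eta Qg Qp Psi theta_s c theta) \<and>
         (\<forall>c\<in>{cmax..0}. (\<exists>theta. solves_Pc eta Qg Qp Psi theta_s c theta) \<longrightarrow> c \<in> {cmax<..<0})"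
proof
  obtain Lp where Lp: "Lp \<ge> 0" and lipP: "\<forall>s t. s \<in> {0..1} \<longrightarrow> t \<in> {0..1} \<longrightarrow> \<bar>Psi s - Psi t\<bar> \<le> Lp * \<bar>s - t\<bar>"
    using lip_from_smooth[OF Psi_smooth] by blast
  interpret P: prob eta Qg Qp cmax Lp Psi theta_s
    by unfold_locales (use eta_pos Qg_pos Qp_gt Psi_pos Psi_1 cmax_neg ths_cont ths_decr ths_0 ths_cmax Lp lipP in auto)
  show "\<exists>c\<in>{cmax..0}. \<exists>theta. solves_Pc eta Qg Qp Psi theta_s c theta"
    by (rule P.existence)
next
  show "\<forall>c\<in>{cmax..0}. (\<exists>theta. solves_Pc eta Qg Qp Psi theta_s c theta) \<longrightarrow> c \<in> {cmax<..<0}"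
    using necessity[OF eta_pos Qg_pos Qp_gt Psi_nonneg cmax_neg ths_0 ths_cmax] by blast
qed


end
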